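(* Let $p\ge1$ and $n\ge2$. If $K\subset\mathbb{R}^n$ is an $L_{n+p}$-star with $V(K)>0$, then $$V(\Lambda_p^{\circ}\Lambda_p^{\circ}K)\ge V(K),$$ with equality if and only if $\rho_K(u)=\rho_{\Lambda_p^{\circ}\Lambda_p^{\circ}K}(u)$ for almost all $u\in S^{n-1}$ with respect to spherical measure.
   Context: $V$ is volume in $\mathbb{R}^n$, $\omega_s=\pi^{s/2}/\Gamma(1+s/2)$, and $du$ the rotation-invariant probability measure on $S^{n-1}$. For $x,y\in\mathbb{R}^n$ let $[x,y]=\sqrt{|x|^2|y|^2-(x\cdot y)^2}$. An $L_{n+p}$-star is a set $L=\{ru: u\in S^{n-1}, 0\le r\le\rho_L(u)\}$ with $\rho_L:S^{n-1}\to[0,\infty)$ measurable and $\int_{S^{n-1}}\rho_L^{n+p}\,du<\infty$ ($\rho_L$ is its radial function). For an $L_{n+p}$-star $K$ with $V(K)>0$, $\Lambda_pK$ is the origin-symmetric convex body with support function $h_{\Lambda_pK}(x)^p=\frac{1}{\widetilde c_{n,p}V(K)}\int_K[x,y]^p\,dy$, where $\widetilde c_{n,p}=\frac{(n-1)\omega_{n-1}\omega_{n+p-2}}{(n+p)\omega_n\omega_{n+p-3}}$; $\Lambda_p^{\circ}K=\{x: x\cdot y\le1\ \forall y\in\Lambda_pK\}$ is its polar body (a convex body containing the origin in its interior, hence itself an $L_{n+p}$-star of positive volume), and $\Lambda_p^{\circ}\Lambda_p^{\circ}K=\Lambda_p^{\circ}(\Lambda_p^{\circ}K)$. *)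

theory Defs
  imports "HOL-Analysis.Analysis"
begin

definition vol :: "(real^'n) set \<Rightarrow> real" where
  "vol A = measure lebesgue A"

definition omega :: "real \<Rightarrow> real" where
  "omega s = pi powr (s / 2) / Gamma (1 + s / 2)"

text \<open>Rotation-invariant probability measure du on the unit sphere, realised as the
  push-forward of the normalised Lebesgue measure on the unit ball under x |-> x/|x|.
  It is concentrated on sphere 0 1.\<close>
definition sphere_prob :: "(real^'n) measure" where
  "sphere_prob = distr (uniform_measure lebesgue (ball 0 1)) borel (\<lambda>x. sgn x)"

definition brack :: "real^'n \<Rightarrow> real^'n \<Rightarrow> real" where
  "brack x y = sqrt ((norm x)\<^sup>2 * (norm y)\<^sup>2 - (x \<bullet> y)\<^sup>2)"

definition radial :: "(real^'n) set \<Rightarrow> real^'n \<Rightarrow> real" where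
  "radial L u = Sup {r. 0 \<le> r \<and> r *\<^sub>R u \<in> L}"

definition Lstar :: "real \<Rightarrow> (real^'n) set \<Rightarrow> bool" where
  "Lstar p L \<longleftrightarrow> (\<exists>\<rho> :: real^'n \<Rightarrow> real.
     \<rho> \<in> borel_measurable sphere_prob \<and>
     (\<forall>u\<in>sphere 0 1. 0 \<le> \<rho> u) \<and>
     integrable sphere_prob (\<lambda>u. \<rho> u powr (real CARD('n) + p)) \<and>
     L = {r *\<^sub>R u | r u. u \<in> sphere 0 1 \<and> 0 \<le> r \<and> r \<le> \<rho> u})"

definition ctilde :: "nat \<Rightarrow> real \<Rightarrow> real" where
  "ctilde n p = ((real n - 1) * omega (real n - 1) * omega (real n + p - 2)) /
                ((real n + p) * omega (real n) * omega (real n + p - 3))"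

definition hLambda :: "real \<Rightarrow> (real^'n) set \<Rightarrow> real^'n \<Rightarrow> real" where
  "hLambda p K x = ((1 / (ctilde CARD('n) p * vol K)) *
                    (LINT y:K|lebesgue. brack x y powr p)) powr (1 / p)"

definition Lambda :: "real \<Rightarrow> (real^'n) set \<Rightarrow> (real^'n) set" where
  "Lambda p K = {z. \<forall>x. z \<bullet> x \<le> hLambda p K x}"

definition polar :: "(real^'n) set \<Rightarrow> (real^'n) set" where
  "polar A = {x. \<forall>y\<in>A. x \<bullet> y \<le> 1}"

definition LambdaPolar :: "real \<Rightarrow> (real^'n) set \<Rightarrow> (real^'n) set" where
  "LambdaPolar p K = polar (Lambda p K)"

end

theory Submission
  imports Defs "HOL-Real_Asymp.Real_Asymp"
begin

lemma sets_sphere_prob[simp, measurable_cong]: "sets (sphere_prob :: (real^'n) measure) = sets borel"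
  by (simp add: sphere_prob_def)

lemma space_sphere_prob[simp]: "space (sphere_prob :: (real^'n) measure) = UNIV"
  by (simp add: sphere_prob_def)

lemma ball_pos: "0 < emeasure lborel (ball (0::real^'n) 1)"
  by (simp add: emeasure_ball)

lemma emeasure_sphere_prob_UNIV: "emeasure (sphere_prob :: (real^'n) measure) UNIV = 1"
proof -
  have "emeasure (sphere_prob :: (real^'n) measure) UNIV = emeasure (uniform_measure lebesgue (ball (0::real^'n) 1)) UNIV"
    unfolding sphere_prob_def
    by (subst emeasure_distr) (auto simp: measurable_completion measurable_cong_sets[OF sets_uniform_measure refl])
  also have "\<dots> = 1"
    using ball_pos[where 'n='n] emeasure_lborel_ball_finite[of "0::real^'n" 1]
    by (simp add: emeasure_completion ennreal_divide_self)
  finally show ?thesis .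
qed

lemma finite_measure_sphere_prob: "finite_measure (sphere_prob :: (real^'n) measure)"
  by (rule finite_measureI) (simp add: emeasure_sphere_prob_UNIV)

lemma nn_integral_sphere_prob:
  assumes [measurable]: "g \<in> borel_measurable (borel :: (real^'n) measure)"
  shows "(\<integral>\<^sup>+u. g u \<partial>(sphere_prob :: (real^'n) measure)) =
     (\<integral>\<^sup>+x. g (sgn x) * indicator (ball 0 1) x \<partial>lborel) / emeasure lborel (ball (0::real^'n) 1)"
proof -
  have m: "(\<lambda>x. g (sgn x)) \<in> borel_measurable (lborel :: (real^'n) measure)" by measurable
  have "(\<integral>\<^sup>+u. g u \<partial>(sphere_prob :: (real^'n) measure)) =
        (\<integral>\<^sup>+x. g (sgn x) \<partial>uniform_measure lebesgue (ball (0::real^'n) 1))"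
    unfolding sphere_prob_def
    by (rule nn_integral_distr) (auto simp: measurable_completion measurable_cong_sets[OF sets_uniform_measure refl])
  also have "\<dots> = (\<integral>\<^sup>+x. g (sgn x) * indicator (ball 0 1) x \<partial>lebesgue) / emeasure lebesgue (ball (0::real^'n) 1)"
    by (rule nn_integral_uniform_measure) (auto simp: measurable_completion m)
  also have "\<dots> = (\<integral>\<^sup>+x. g (sgn x) * indicator (ball 0 1) x \<partial>lborel) / emeasure lborel (ball (0::real^'n) 1)"
    by (simp add: nn_integral_completion)
  finally show ?thesis .
qed

lemma AE_sphere_prob: "AE u in (sphere_prob :: (real^'n) measure). norm u = 1"
proof -
  have "AE x in uniform_measure lebesgue (ball (0::real^'n) 1). x \<noteq> 0"
  proof -
    have "AE x in lebesgue. x \<noteq> (0::real^'n)"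
      by (rule AE_I'[where N="{0}"]) auto
    then show ?thesis by (intro AE_uniform_measureI) auto
  qed
  then show ?thesis unfolding sphere_prob_def
    by (subst AE_distr_iff) (auto simp: measurable_completion norm_sgn measurable_cong_sets[OF sets_uniform_measure refl] elim!: AE_mp)
qed

lemma weight_integral:
  fixes a :: real and N :: nat
  assumes a: "a > 0" and N: "N > 0"
  shows "(\<integral>\<^sup>+t. indicator {a<..} t * ennreal (N * a ^ N / t ^ (N+1)) \<partial>lborel) = 1"
proof -
  have "(\<integral>\<^sup>+t. indicator {a<..} t * ennreal (N * a ^ N / t ^ (N+1)) \<partial>lborel) =
        (\<integral>\<^sup>+t. ennreal (N * a ^ N / t ^ (N+1)) * indicator {a..} t \<partial>lborel)"
  proof (rule nn_integral_cong_AE)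
    show "AE t in lborel. indicator {a<..} t * ennreal (N * a ^ N / t ^ (N+1)) =
        ennreal (N * a ^ N / t ^ (N+1)) * indicator {a..} t"
      by (rule AE_I'[where N="{a}"]) (auto split: split_indicator)
  qed
  also have "\<dots> = ennreal (0 - (- (a ^ N / a ^ N)))"
  proof (rule nn_integral_FTC_atLeast[where F="\<lambda>t. - (a ^ N / t ^ N)" and T=0])
    show "(\<lambda>t. N * a ^ N / t ^ (N+1)) \<in> borel_measurable borel" by measurable
    fix t assume t: "a \<le> t"
    then have t0: "t > 0" using a by simp
    show "0 \<le> N * a ^ N / t ^ (N+1)" using t0 a by simp
    show "((\<lambda>t. - (a ^ N / t ^ N)) has_real_derivative N * a ^ N / t ^ (N+1)) (at t)"
      using t0 N
      apply (auto intro!: derivative_eq_intros simp: field_simps power_Suc)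
      by (metis Suc_pred power_Suc)
  next
    show "((\<lambda>t. - (a ^ N / t ^ N)) \<longlongrightarrow> 0) at_top"
      using N by real_asymp
  qed
  also have "\<dots> = 1" using a by simp
  finally show ?thesis .
qed

lemma DIM_vec_real[simp]: "DIM(real^'n) = CARD('n)" by simp

lemma lborel_scale_vec:
  fixes G :: "real^'n \<Rightarrow> ennreal" and c :: real
  assumes [measurable]: "G \<in> borel_measurable borel" and c: "c > 0"
  shows "(\<integral>\<^sup>+x. G x \<partial>lborel) = ennreal (c ^ CARD('n)) * (\<integral>\<^sup>+y. G (c *\<^sub>R y) \<partial>lborel)"
proof -
  have "(\<integral>\<^sup>+x. G x \<partial>lborel) = (\<integral>\<^sup>+x. G x \<partial>density (distr lborel borel (\<lambda>x. 0 + c *\<^sub>R x)) (\<lambda>_. ennreal (\<bar>c\<bar> ^ DIM(real^'n))))"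
    using lborel_affine[of c "0::real^'n"] c by simp
  also have "\<dots> = ennreal (c ^ CARD('n)) * (\<integral>\<^sup>+y. G (c *\<^sub>R y) \<partial>lborel)"
    using c by (simp add: nn_integral_density nn_integral_distr nn_integral_cmult)
  finally show ?thesis .
qed

definition radQ :: "(real^'n \<Rightarrow> ennreal) \<Rightarrow> real^'n \<Rightarrow> ennreal" where
  "radQ F u = (\<integral>\<^sup>+s. indicator {0<..} s * ennreal (CARD('n) * s ^ (CARD('n) - 1)) * F (s *\<^sub>R u) \<partial>lborel)"

lemma ennreal_mult_swap: "0 \<le> a \<Longrightarrow> 0 \<le> b \<Longrightarrow> ennreal a * (F * ennreal b) = F * ennreal (a * b)"
  by (simp add: ennreal_mult mult_ac)

lemma polar_formula:
  fixes F :: "real^'n \<Rightarrow> ennreal"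
  assumes [measurable]: "F \<in> borel_measurable borel"
  shows "(\<integral>\<^sup>+x. F x \<partial>lborel) = emeasure lborel (ball (0::real^'n) 1) * (\<integral>\<^sup>+u. radQ F u \<partial>sphere_prob)"
proof -
  define N where "N = CARD('n)"
  have N: "N > 0" unfolding N_def by simp
  have [measurable]: "ball (0::real^'n) 1 \<in> sets borel" by simp
  define W where "W x t = (if norm x < t then ennreal (N * norm x ^ N / t ^ (N+1)) else 0)" for x :: "real^'n" and t :: real
  have Wm[measurable]: "(\<lambda>(x,t). W x t) \<in> borel_measurable (lborel \<Otimes>\<^sub>M lborel)"
    unfolding W_def by measurable
  have "(\<integral>\<^sup>+x. F x \<partial>lborel) = (\<integral>\<^sup>+x. (\<integral>\<^sup>+t. F x * W x t \<partial>lborel) \<partial>lborel)"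
  proof (rule nn_integral_cong_AE)
    have "AE x in lborel. x \<noteq> (0::real^'n)"
      by (rule AE_I'[where N="{0}"]) auto
    then show "AE x in lborel. F x = (\<integral>\<^sup>+t. F x * W x t \<partial>lborel)"
    proof (rule AE_mp, intro AE_I2 impI)
      fix x :: "real^'n" assume "x \<noteq> 0"
      then have "(\<integral>\<^sup>+t. W x t \<partial>lborel) = 1"
      proof -
        have "(\<integral>\<^sup>+t. W x t \<partial>lborel) = (\<integral>\<^sup>+t. indicator {norm x<..} t * ennreal (N * norm x ^ N / t ^ (N+1)) \<partial>lborel)"
          by (rule nn_integral_cong) (simp add: W_def)
        then show ?thesis using weight_integral[of "norm x" N] N \<open>x \<noteq> 0\<close> by simp
      qed
      moreover have Wx: "W x \<in> borel_measurable lborel" unfolding W_def by measurable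
      ultimately show "F x = (\<integral>\<^sup>+t. F x * W x t \<partial>lborel)"
        by (simp add: nn_integral_cmult[OF Wx])
    qed
  qed
  also have "\<dots> = (\<integral>\<^sup>+t. (\<integral>\<^sup>+x. F x * W x t \<partial>lborel) \<partial>lborel)"
    by (rule lborel_pair.Fubini'[symmetric]) measurable
  also have "\<dots> = (\<integral>\<^sup>+t. (\<integral>\<^sup>+y. indicator {0<..} t * indicator (ball 0 1) y *
        ennreal (N * norm y ^ N * t ^ (N - 1)) * F (t *\<^sub>R y) \<partial>lborel) \<partial>lborel)"
  proof (rule nn_integral_cong)
    fix t :: real
    show "(\<integral>\<^sup>+x. F x * W x t \<partial>lborel) = (\<integral>\<^sup>+y. indicator {0<..} t * indicator (ball 0 1) y *
        ennreal (N * norm y ^ N * t ^ (N - 1)) * F (t *\<^sub>R y) \<partial>lborel)"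
    proof (cases "t > 0")
      case False
      then have "\<And>x. W x t = 0" unfolding W_def
        by (auto) (meson norm_ge_zero order.strict_trans1)
      then show ?thesis using False by simp
    next
      case True
      have "(\<integral>\<^sup>+x. F x * W x t \<partial>lborel) = ennreal (t ^ N) * (\<integral>\<^sup>+y. F (t *\<^sub>R y) * W (t *\<^sub>R y) t \<partial>lborel)"
        unfolding N_def by (rule lborel_scale_vec) (use True in \<open>auto simp: W_def\<close>)
      also have "\<dots> = (\<integral>\<^sup>+y. ennreal (t ^ N) * (F (t *\<^sub>R y) * W (t *\<^sub>R y) t) \<partial>lborel)"
        by (rule nn_integral_cmult[symmetric]) (auto simp: W_def)
      also have "\<dots> = (\<integral>\<^sup>+y. indicator {0<..} t * indicator (ball 0 1) y *
        ennreal (N * norm y ^ N * t ^ (N - 1)) * F (t *\<^sub>R y) \<partial>lborel)"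
      proof (rule nn_integral_cong)
        fix y :: "real^'n"
        have e: "t ^ N * (N * (t * norm y) ^ N / t ^ (N + 1)) = N * norm y ^ N * t ^ (N - 1)"
          using True N by (cases N) (auto simp: field_simps power_mult_distrib)
        show "ennreal (t ^ N) * (F (t *\<^sub>R y) * W (t *\<^sub>R y) t) = indicator {0<..} t * indicator (ball 0 1) y *
          ennreal (N * norm y ^ N * t ^ (N - 1)) * F (t *\<^sub>R y)"
        proof (cases "norm y < 1")
          case yl: True
          have q: "0 \<le> N * (t * norm y) ^ N / t ^ (N + 1)" using True by simp
          have "ennreal (t ^ N) * (F (t *\<^sub>R y) * ennreal (N * (t * norm y) ^ N / t ^ (N + 1))) =
                F (t *\<^sub>R y) * ennreal (t ^ N * (N * (t * norm y) ^ N / t ^ (N + 1)))"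
            apply (subst ennreal_mult) using True q by (auto simp: mult_ac)
          then show ?thesis using True yl e by (simp add: W_def mult_ac)
        next
          case False
          then show ?thesis using True by (simp add: W_def)
        qed
      qed
      finally show ?thesis .
    qed
  qed
  also have "\<dots> = (\<integral>\<^sup>+y. (\<integral>\<^sup>+t. indicator {0<..} t * indicator (ball 0 1) y *
        ennreal (N * norm y ^ N * t ^ (N - 1)) * F (t *\<^sub>R y) \<partial>lborel) \<partial>lborel)"
    by (rule lborel_pair.Fubini') measurable
  also have "\<dots> = (\<integral>\<^sup>+y. radQ F (sgn y) * indicator (ball 0 1) y \<partial>lborel)"
  proof (rule nn_integral_cong_AE)
    have "AE x in lborel. x \<noteq> (0::real^'n)"
      by (rule AE_I'[where N="{0}"]) auto
    then show "AE y in lborel. (\<integral>\<^sup>+t. indicator {0<..} t * indicator (ball 0 1) y *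
        ennreal (N * norm y ^ N * t ^ (N - 1)) * F (t *\<^sub>R y) \<partial>lborel) = radQ F (sgn y) * indicator (ball 0 1) y"
    proof (rule AE_mp, intro AE_I2 impI)
      fix y :: "real^'n" assume y: "y \<noteq> 0"
      define c where "c = 1 / norm y"
      have c: "c > 0" using y by (simp add: c_def)
      have "(\<integral>\<^sup>+t. indicator {0<..} t * indicator (ball 0 1) y *
        ennreal (N * norm y ^ N * t ^ (N - 1)) * F (t *\<^sub>R y) \<partial>lborel) =
        ennreal \<bar>c\<bar> * (\<integral>\<^sup>+s. indicator {0<..} (0 + c * s) * indicator (ball 0 1) y *
        ennreal (N * norm y ^ N * (0 + c * s) ^ (N - 1)) * F ((0 + c * s) *\<^sub>R y) \<partial>lborel)"
        by (rule nn_integral_real_affine) (use c in auto)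
      also have "\<dots> = (\<integral>\<^sup>+s. ennreal c * (indicator {0<..} (c * s) * indicator (ball 0 1) y *
        ennreal (N * norm y ^ N * (c * s) ^ (N - 1)) * F ((c * s) *\<^sub>R y)) \<partial>lborel)"
        using c by (subst nn_integral_cmult) auto
      also have "\<dots> = (\<integral>\<^sup>+s. indicator (ball 0 1) y * (indicator {0<..} s * ennreal (N * s ^ (N - 1)) * F (s *\<^sub>R sgn y)) \<partial>lborel)"
      proof (rule nn_integral_cong)
        fix s :: real
        have e1: "(c * s) *\<^sub>R y = s *\<^sub>R sgn y" using y by (simp add: c_def sgn_div_norm divide_inverse_commute)
        have e2: "c * (N * norm y ^ N * (c * s) ^ (N - 1)) = N * s ^ (N - 1)"
          using y N by (cases N) (auto simp: c_def field_simps power_mult_distrib)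
        have e3: "(0 < c * s) = (0 < s)" using c by (simp add: zero_less_mult_iff)
        show "ennreal c * (indicator {0<..} (c * s) * indicator (ball 0 1) y *
          ennreal (N * norm y ^ N * (c * s) ^ (N - 1)) * F ((c * s) *\<^sub>R y)) =
          indicator (ball 0 1) y * (indicator {0<..} s * ennreal (N * s ^ (N - 1)) * F (s *\<^sub>R sgn y))"
          using c e1 e2[symmetric] e3
          by (auto split: split_indicator simp: ennreal_mult_swap mult_ac)
      qed
      also have "\<dots> = indicator (ball 0 1) y * radQ F (sgn y)"
        unfolding radQ_def N_def by (rule nn_integral_cmult) measurable
      finally show "(\<integral>\<^sup>+t. indicator {0<..} t * indicator (ball 0 1) y *
        ennreal (N * norm y ^ N * t ^ (N - 1)) * F (t *\<^sub>R y) \<partial>lborel) = radQ F (sgn y) * indicator (ball 0 1) y"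
        by (simp add: mult.commute)
    qed
  qed
  also have "\<dots> = emeasure lborel (ball (0::real^'n) 1) * (\<integral>\<^sup>+u. radQ F u \<partial>sphere_prob)"
  proof -
    have m: "radQ F \<in> borel_measurable borel" unfolding radQ_def by measurable
    have fin: "emeasure lborel (ball (0::real^'n) 1) \<noteq> \<infinity>" using emeasure_lborel_ball_finite[of "0::real^'n" 1] by auto
    have nz: "emeasure lborel (ball (0::real^'n) 1) \<noteq> 0" using ball_pos[where 'n='n] by auto
    show ?thesis
      using fin nz by (simp add: nn_integral_sphere_prob[OF m] ennreal_times_divide mult.commute[of "emeasure lborel (ball (0::real^'n) 1)"] mult_divide_eq_ennreal)
  qed
  finally show ?thesis .
qed

definition starset :: "(real^'n \<Rightarrow> real) \<Rightarrow> (real^'n) set" where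
  "starset \<rho> = {r *\<^sub>R u | r u. u \<in> sphere 0 1 \<and> 0 \<le> r \<and> r \<le> \<rho> u}"

lemma starset_scaled_mem:
  assumes u: "norm u = 1" and s: "s > 0"
  shows "s *\<^sub>R u \<in> starset \<rho> \<longleftrightarrow> s \<le> \<rho> u"
proof
  assume "s *\<^sub>R u \<in> starset \<rho>"
  then obtain r v where rv: "s *\<^sub>R u = r *\<^sub>R v" "norm v = 1" "0 \<le> r" "r \<le> \<rho> v"
    unfolding starset_def by auto
  have "s = norm (s *\<^sub>R u)" using u s by simp
  also have "\<dots> = norm (r *\<^sub>R v)" using rv by simp
  also have "\<dots> = r" using rv by simp
  finally have "s = r" .
  then have "u = v" using rv s by simp
  then show "s \<le> \<rho> u" using rv \<open>s = r\<close> by simp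
next
  assume "s \<le> \<rho> u"
  then show "s *\<^sub>R u \<in> starset \<rho>" unfolding starset_def using u s by force
qed

lemma zero_in_starset:
  assumes "\<forall>u\<in>sphere (0::real^'n) 1. 0 \<le> \<rho> u"
  shows "0 \<in> starset \<rho>"
proof -
  obtain u :: "real^'n" where u: "norm u = 1" using vector_choose_size[of 1] by auto
  then show ?thesis unfolding starset_def using assms by (intro CollectI exI[of _ 0] exI[of _ u]) auto
qed

lemma starset_eq:
  assumes "\<forall>u\<in>sphere (0::real^'n) 1. 0 \<le> \<rho> u"
  shows "starset \<rho> = {x. x = 0 \<or> norm x \<le> \<rho> (sgn x)}"
proof (intro set_eqI iffI)
  fix x :: "real^'n" assume x: "x \<in> starset \<rho>"
  show "x \<in> {x. x = 0 \<or> norm x \<le> \<rho> (sgn x)}"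
  proof (cases "x = 0")
    case False
    then have "x = norm x *\<^sub>R sgn x" "norm (sgn x) = 1" "norm x > 0" by (auto simp: norm_sgn sgn_div_norm)
    then show ?thesis using x starset_scaled_mem[of "sgn x" "norm x" \<rho>] by auto
  qed simp
next
  fix x :: "real^'n" assume x: "x \<in> {x. x = 0 \<or> norm x \<le> \<rho> (sgn x)}"
  show "x \<in> starset \<rho>"
  proof (cases "x = 0")
    case True then show ?thesis using zero_in_starset[OF assms] by simp
  next
    case False
    then have "x = norm x *\<^sub>R sgn x" "norm (sgn x) = 1" "norm x > 0" by (auto simp: norm_sgn sgn_div_norm)
    then show ?thesis using x False starset_scaled_mem[of "sgn x" "norm x" \<rho>] by auto
  qed
qed

lemma starset_borel[measurable]:
  assumes "\<forall>u\<in>sphere (0::real^'n) 1. 0 \<le> \<rho> u" and [measurable]: "\<rho> \<in> borel_measurable borel"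
  shows "starset \<rho> \<in> sets borel"
  unfolding starset_eq[OF assms(1)] by measurable

lemma radial_starset:
  assumes "\<forall>u\<in>sphere (0::real^'n) 1. 0 \<le> \<rho> u" and u: "norm u = 1"
  shows "radial (starset \<rho>) u = \<rho> u"
proof -
  have "{r. 0 \<le> r \<and> r *\<^sub>R u \<in> starset \<rho>} = {0..\<rho> u}"
  proof (intro set_eqI iffI)
    fix r assume "r \<in> {r. 0 \<le> r \<and> r *\<^sub>R u \<in> starset \<rho>}"
    then show "r \<in> {0..\<rho> u}" using starset_scaled_mem[OF u, of r \<rho>] assms by (cases "r = 0") auto
  next
    fix r assume "r \<in> {0..\<rho> u}"
    then show "r \<in> {r. 0 \<le> r \<and> r *\<^sub>R u \<in> starset \<rho>}"
      using starset_scaled_mem[OF u, of r \<rho>] zero_in_starset[OF assms(1)] by (cases "r = 0") auto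
  qed
  moreover have "0 \<le> \<rho> u" using assms by auto
  ultimately show ?thesis unfolding radial_def by simp
qed

lemma radial_integral_1d:
  fixes r q :: real and N :: nat
  assumes r: "r \<ge> 0" and q: "q \<ge> 0" and N: "N > 0"
  shows "(\<integral>\<^sup>+s. indicator {0<..} s * ennreal (N * s ^ (N - 1)) * (indicator {..r} s * ennreal (s powr q)) \<partial>lborel)
     = ennreal (N / (N + q) * r powr (N + q))"
proof -
  have h: "((\<lambda>s. s powr (N - 1 + q)) has_integral (r powr (N - 1 + q + 1) / (N - 1 + q + 1))) {0..r}"
    by (rule has_integral_powr_from_0) (use N q r in auto)
  have "(\<integral>\<^sup>+s. indicator {0..r} s * ennreal (s powr (N - 1 + q)) \<partial>lborel) = ennreal (r powr (N - 1 + q + 1) / (N - 1 + q + 1))"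
  proof -
    have "\<And>s. indicator {0..r} s * ennreal (s powr (N - 1 + q)) = ennreal (indicator {0..r} s * s powr (N - 1 + q))"
      by (simp add: indicator_def)
    then show ?thesis using nn_integral_has_integral_lebesgue[OF _ h] by simp
  qed
  moreover have "(\<integral>\<^sup>+s. indicator {0<..} s * ennreal (N * s ^ (N - 1)) * (indicator {..r} s * ennreal (s powr q)) \<partial>lborel)
     = (\<integral>\<^sup>+s. ennreal N * (indicator {0..r} s * ennreal (s powr (N - 1 + q))) \<partial>lborel)"
  proof (rule nn_integral_cong_AE)
    show "AE s in lborel. indicator {0<..} s * ennreal (N * s ^ (N - 1)) * (indicator {..r} s * ennreal (s powr q)) =
        ennreal N * (indicator {0..r} s * ennreal (s powr (N - 1 + q)))"
    proof -
      have "AE s in lborel. s \<noteq> (0::real)" by (rule AE_I'[where N="{0}"]) auto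
      then show ?thesis
      proof (rule AE_mp, intro AE_I2 impI)
        fix s :: real assume s0: "s \<noteq> 0"
        show "indicator {0<..} s * ennreal (N * s ^ (N - 1)) * (indicator {..r} s * ennreal (s powr q)) =
          ennreal N * (indicator {0..r} s * ennreal (s powr (N - 1 + q)))"
        proof (cases "0 < s \<and> s \<le> r")
          case True
          have a: "s powr (real (N - 1)) = s ^ (N - 1)" using True by (simp add: powr_realpow)
          have "s ^ (N - 1) * s powr q = s powr (N - 1 + q)"
            by (simp only: powr_add a)
          then have "ennreal (N * s ^ (N - 1)) * ennreal (s powr q) = ennreal N * ennreal (s powr (N - 1 + q))"
            using True by (simp add: ennreal_mult[symmetric] mult_ac)
          then show ?thesis using True by (simp add: indicator_def)
        next
          case False
          then show ?thesis using s0 by (auto simp: indicator_def)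
        qed
      qed
    qed
  qed
  ultimately show ?thesis
    using N q r by (simp add: nn_integral_cmult ennreal_mult[symmetric] of_nat_diff field_simps)
qed

lemma star_integral:
  fixes \<rho> g :: "real^'n \<Rightarrow> real" and q :: real
  assumes nn: "\<forall>u\<in>sphere (0::real^'n) 1. 0 \<le> \<rho> u"
    and [measurable]: "\<rho> \<in> borel_measurable borel" "g \<in> borel_measurable borel"
    and g0: "\<And>x. 0 \<le> g x" and q: "q \<ge> 0"
    and hom: "\<And>u s. norm u = 1 \<Longrightarrow> s > 0 \<Longrightarrow> g (s *\<^sub>R u) = s powr q * g u"
  shows "(\<integral>\<^sup>+x. indicator (starset \<rho>) x * ennreal (g x) \<partial>lborel) =
    emeasure lborel (ball (0::real^'n) 1) *
    (\<integral>\<^sup>+u. ennreal (CARD('n) / (CARD('n) + q) * \<rho> u powr (CARD('n) + q) * g u) \<partial>sphere_prob)"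
proof -
  have [measurable]: "starset \<rho> \<in> sets borel" by (rule starset_borel[OF nn]) simp
  have "(\<integral>\<^sup>+x. indicator (starset \<rho>) x * ennreal (g x) \<partial>lborel) =
    emeasure lborel (ball (0::real^'n) 1) * (\<integral>\<^sup>+u. radQ (\<lambda>x. indicator (starset \<rho>) x * ennreal (g x)) u \<partial>sphere_prob)"
    by (rule polar_formula) measurable
  also have "(\<integral>\<^sup>+u. radQ (\<lambda>x. indicator (starset \<rho>) x * ennreal (g x)) u \<partial>sphere_prob) =
     (\<integral>\<^sup>+u. ennreal (CARD('n) / (CARD('n) + q) * \<rho> u powr (CARD('n) + q) * g u) \<partial>sphere_prob)"
  proof (rule nn_integral_cong_AE)
    show "AE u in sphere_prob. radQ (\<lambda>x. indicator (starset \<rho>) x * ennreal (g x)) u =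
        ennreal (CARD('n) / (CARD('n) + q) * \<rho> u powr (CARD('n) + q) * g u)"
      using AE_sphere_prob
    proof (rule AE_mp, intro AE_I2 impI)
      fix u :: "real^'n" assume u: "norm u = 1"
      have r0: "0 \<le> \<rho> u" using nn u by auto
      have "radQ (\<lambda>x. indicator (starset \<rho>) x * ennreal (g x)) u =
         (\<integral>\<^sup>+s. (indicator {0<..} s * ennreal (CARD('n) * s ^ (CARD('n) - 1)) * (indicator {..\<rho> u} s * ennreal (s powr q))) * ennreal (g u) \<partial>lborel)"
        unfolding radQ_def
      proof (rule nn_integral_cong)
        fix s :: real
        show "indicator {0<..} s * ennreal (CARD('n) * s ^ (CARD('n) - 1)) * (indicator (starset \<rho>) (s *\<^sub>R u) * ennreal (g (s *\<^sub>R u))) =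
          (indicator {0<..} s * ennreal (CARD('n) * s ^ (CARD('n) - 1)) * (indicator {..\<rho> u} s * ennreal (s powr q))) * ennreal (g u)"
        proof (cases "s > 0")
          case True
          then show ?thesis using starset_scaled_mem[OF u True, of \<rho>] hom[OF u True] g0
            by (auto simp: indicator_def ennreal_mult mult_ac)
        qed simp
      qed
      also have "\<dots> = (\<integral>\<^sup>+s. indicator {0<..} s * ennreal (CARD('n) * s ^ (CARD('n) - 1)) * (indicator {..\<rho> u} s * ennreal (s powr q)) \<partial>lborel) * ennreal (g u)"
        by (rule nn_integral_multc) measurable
      also have "\<dots> = ennreal (CARD('n) / (CARD('n) + q) * \<rho> u powr (CARD('n) + q)) * ennreal (g u)"
        using radial_integral_1d[OF r0 q, of "CARD('n)"] by simp
      also have "\<dots> = ennreal (CARD('n) / (CARD('n) + q) * \<rho> u powr (CARD('n) + q) * g u)"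
        using q g0 by (subst ennreal_mult[symmetric]) (auto simp: mult_ac)
      finally show "radQ (\<lambda>x. indicator (starset \<rho>) x * ennreal (g x)) u =
        ennreal (CARD('n) / (CARD('n) + q) * \<rho> u powr (CARD('n) + q) * g u)" .
    qed
  qed
  finally show ?thesis .
qed

lemma brack_radicand_nonneg: "0 \<le> (norm x)\<^sup>2 * (norm y)\<^sup>2 - (x \<bullet> y)\<^sup>2"
proof -
  have "\<bar>x \<bullet> y\<bar> \<le> norm x * norm y" by (rule Cauchy_Schwarz_ineq2)
  then have "(x \<bullet> y)\<^sup>2 \<le> (norm x * norm y)\<^sup>2"
    by (metis abs_ge_zero power2_abs power_mono)
  then show ?thesis by (simp only: power_mult_distrib diff_ge_0_iff_ge)
qed

lemma brack_sq: "(brack x y)\<^sup>2 = (norm x)\<^sup>2 * (norm y)\<^sup>2 - (x \<bullet> y)\<^sup>2"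
proof -
  have "\<bar>x \<bullet> y\<bar> \<le> norm x * norm y" by (rule Cauchy_Schwarz_ineq2)
  then have "(x \<bullet> y)\<^sup>2 \<le> (norm x * norm y)\<^sup>2"
    by (metis abs_ge_zero power2_abs power_mono)
  then have "0 \<le> (norm x)\<^sup>2 * (norm y)\<^sup>2 - (x \<bullet> y)\<^sup>2" by (simp only: power_mult_distrib diff_ge_0_iff_ge)
  then show ?thesis unfolding brack_def by (rule real_sqrt_pow2)
qed

lemma brack_nonneg[simp]: "0 \<le> brack x y"
  unfolding brack_def using brack_radicand_nonneg by simp

lemma brack_sym: "brack x y = brack y x"
  unfolding brack_def by (simp add: inner_commute mult.commute)

lemma brack_scale_left: "brack (t *\<^sub>R x) y = \<bar>t\<bar> * brack x y"
proof -
  have "(t *\<^sub>R x) \<bullet> y = t * (x \<bullet> y)" by simp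
  then have "(norm (t *\<^sub>R x))\<^sup>2 * (norm y)\<^sup>2 - ((t *\<^sub>R x) \<bullet> y)\<^sup>2 = t\<^sup>2 * ((norm x)\<^sup>2 * (norm y)\<^sup>2 - (x \<bullet> y)\<^sup>2)"
    by (simp add: power_mult_distrib algebra_simps)
  then show ?thesis unfolding brack_def by (simp add: real_sqrt_mult)
qed

lemma brack_scale_right: "brack x (t *\<^sub>R y) = \<bar>t\<bar> * brack x y"
  using brack_scale_left[of t y x] by (simp add: brack_sym)

lemma brack_le: "brack x y \<le> norm x * norm y"
proof -
  have "(brack x y)\<^sup>2 \<le> (norm x * norm y)\<^sup>2" by (simp add: brack_sq power_mult_distrib)
  then show ?thesis by (simp add: power2_le_iff_abs_le)
qed

lemma brack_norm_eq: "brack x y * norm y = norm ((y \<bullet> y) *\<^sub>R x - (x \<bullet> y) *\<^sub>R y)"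
proof -
  have "((y \<bullet> y) *\<^sub>R x - (x \<bullet> y) *\<^sub>R y) \<bullet> ((y \<bullet> y) *\<^sub>R x - (x \<bullet> y) *\<^sub>R y) = (y \<bullet> y)\<^sup>2 * (x \<bullet> x) - 2 * (y \<bullet> y) * (x \<bullet> y)\<^sup>2 + (x \<bullet> y)\<^sup>2 * (y \<bullet> y)"
    by (simp add: inner_diff_left inner_diff_right algebra_simps power2_eq_square inner_commute)
  then have "(norm ((y \<bullet> y) *\<^sub>R x - (x \<bullet> y) *\<^sub>R y))\<^sup>2 = (y \<bullet> y)\<^sup>2 * (x \<bullet> x) - 2 * (y \<bullet> y) * (x \<bullet> y)\<^sup>2 + (x \<bullet> y)\<^sup>2 * (y \<bullet> y)"
    by (simp only: power2_norm_eq_inner)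
  also have "\<dots> = ((brack x y) * norm y)\<^sup>2"
    unfolding power_mult_distrib brack_sq power2_norm_eq_inner by (simp add: algebra_simps power2_eq_square)
  finally show ?thesis
    by (metis abs_of_nonneg brack_nonneg norm_ge_zero real_sqrt_abs zero_le_mult_iff)
qed

lemma brack_triangle: "brack (x + x') y \<le> brack x y + brack x' y"
proof (cases "y = 0")
  case True then show ?thesis by (simp add: brack_def)
next
  case False
  then have ny: "norm y > 0" by simp
  have "brack (x + x') y * norm y = norm (((y \<bullet> y) *\<^sub>R x - (x \<bullet> y) *\<^sub>R y) + ((y \<bullet> y) *\<^sub>R x' - (x' \<bullet> y) *\<^sub>R y))"
    unfolding brack_norm_eq by (simp add: algebra_simps inner_add_left)
  also have "\<dots> \<le> brack x y * norm y + brack x' y * norm y"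
    unfolding brack_norm_eq by (rule norm_triangle_ineq)
  finally show ?thesis using ny by (simp add: distrib_right[symmetric])
qed

lemma brack_zero_span:
  assumes "x \<noteq> 0" "y \<noteq> 0" "brack x y = 0"
  shows "y \<in> span {x}"
proof -
  have "norm ((y \<bullet> y) *\<^sub>R x - (x \<bullet> y) *\<^sub>R y) = 0" using brack_norm_eq[of x y] assms by simp
  then have e: "(y \<bullet> y) *\<^sub>R x = (x \<bullet> y) *\<^sub>R y" by simp
  have yy: "y \<bullet> y \<noteq> 0" using assms by simp
  have xy: "x \<bullet> y \<noteq> 0"
  proof
    assume "x \<bullet> y = 0"
    then have "(y \<bullet> y) *\<^sub>R x = 0" using e by simp
    then show False using yy assms by simp
  qed
  have "((y \<bullet> y) / (x \<bullet> y)) *\<^sub>R x = (1 / (x \<bullet> y)) *\<^sub>R ((y \<bullet> y) *\<^sub>R x)" by simp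
  also have "\<dots> = (1 / (x \<bullet> y)) *\<^sub>R ((x \<bullet> y) *\<^sub>R y)" using e by simp
  also have "\<dots> = y" using xy by simp
  finally have "y = ((y \<bullet> y) / (x \<bullet> y)) *\<^sub>R x" by simp
  then show ?thesis by (metis span_breakdown_eq span_empty span_zero singletonI span_mul span_base)
qed

lemma powr_convex0:
  fixes a b t p :: real
  assumes "p \<ge> 1" "0 \<le> a" "0 \<le> b" "0 \<le> t" "t \<le> 1"
  shows "((1 - t) * a + t * b) powr p \<le> (1 - t) * a powr p + t * b powr p"
proof -
  have key: "(s * c) powr p \<le> s * c powr p" if "0 \<le> s" "s \<le> 1" "0 \<le> c" for s c :: real
  proof -
    have "s powr p \<le> s powr 1" using that assms(1) by (intro powr_mono') auto
    then have "s powr p \<le> s" using that by simp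
    then show ?thesis using that by (simp add: powr_mult mult_right_mono)
  qed
  show ?thesis
  proof (cases "a = 0 \<or> b = 0")
    case True
    then show ?thesis
    proof
      assume "a = 0" then show ?thesis using key[of t b] assms by simp
    next
      assume "b = 0" then show ?thesis using key[of "1 - t" a] assms by simp
    qed
  next
    case False
    then have "a > 0" "b > 0" using assms by auto
    then show ?thesis using convex_onD[OF powr_convex[OF assms(1)], of t a b] assms by simp
  qed
qed

locale gauge_fn =
  fixes h :: "real^'n \<Rightarrow> real"
  assumes hom: "\<And>t x. h (t *\<^sub>R x) = \<bar>t\<bar> * h x"
    and subadd: "\<And>x y. h (x + y) \<le> h x + h y"
    and pos: "\<And>x. x \<noteq> 0 \<Longrightarrow> h x > 0"
begin

lemma h0[simp]: "h 0 = 0" using hom[of 0 0] by simp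

lemma nonneg: "h x \<ge> 0" using pos[of x] by (cases "x = 0") auto

lemma convex: "convex_on UNIV h"
  unfolding convex_on_def
proof (intro conjI ballI allI impI)
  fix x y :: "real^'n" and u v :: real assume uv: "0 \<le> u" "0 \<le> v" "u + v = 1"
  have "h (u *\<^sub>R x + v *\<^sub>R y) \<le> h (u *\<^sub>R x) + h (v *\<^sub>R y)" by (rule subadd)
  also have "\<dots> = u * h x + v * h y" using uv by (simp add: hom)
  finally show "h (u *\<^sub>R x + v *\<^sub>R y) \<le> u * h x + v * h y" .
qed simp

lemma continuous: "continuous_on UNIV h"
  by (rule convex_on_continuous[OF open_UNIV convex])

lemma borel[measurable]: "h \<in> borel_measurable borel"
  by (rule borel_measurable_continuous_onI[OF continuous])

end

lemma gauge_from_power: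
  fixes \<phi> :: "real^'n \<Rightarrow> real" and C p :: real
  assumes p: "p \<ge> 1" and C: "C > 0" and nn: "\<And>x. \<phi> x \<ge> 0"
    and hom: "\<And>t x. \<phi> (t *\<^sub>R x) = \<bar>t\<bar> powr p * \<phi> x"
    and cvx: "convex_on UNIV \<phi>"
    and pos: "\<And>x. x \<noteq> 0 \<Longrightarrow> \<phi> x > 0"
  shows "gauge_fn (\<lambda>x. (C * \<phi> x) powr (1 / p))"
proof -
  define h where "h x = (C * \<phi> x) powr (1 / p)" for x
  have hhom: "h (t *\<^sub>R x) = \<bar>t\<bar> * h x" for t x
  proof (cases "t = 0")
    case False
    have "h (t *\<^sub>R x) = (\<bar>t\<bar> powr p * (C * \<phi> x)) powr (1 / p)" unfolding h_def hom by (simp add: mult_ac)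
    also have "\<dots> = (\<bar>t\<bar> powr p) powr (1 / p) * h x"
      unfolding h_def using C nn by (subst powr_mult) auto
    also have "(\<bar>t\<bar> powr p) powr (1 / p) = \<bar>t\<bar>" using p False by (simp add: powr_powr)
    finally show ?thesis .
  next
    case True
    then show ?thesis using hom[of 0 x] p unfolding h_def by simp
  qed
  have hpos: "h x > 0" if "x \<noteq> 0" for x
    unfolding h_def using pos[OF that] C by simp
  have hnn: "h x \<ge> 0" for x unfolding h_def by simp
  have lev: "h x \<le> 1 \<longleftrightarrow> C * \<phi> x \<le> 1" for x
  proof -
    have "0 \<le> C * \<phi> x" using C nn by simp
    moreover have "z powr (1/p) \<le> 1 \<longleftrightarrow> z \<le> 1" if z: "0 \<le> z" for z :: real
    proof
      assume "z powr (1/p) \<le> 1"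
      moreover have "1 < z \<Longrightarrow> 1 < z powr (1/p)" using p by (intro gr_one_powr) auto
      ultimately show "z \<le> 1" by linarith
    next
      assume "z \<le> 1"
      then have "z powr (1/p) \<le> 1 powr (1/p)" using z p by (intro powr_mono2) auto
      then show "z powr (1/p) \<le> 1" by simp
    qed
    ultimately show ?thesis unfolding h_def by simp
  qed
  have sub: "h (x + y) \<le> h x + h y" for x y
  proof (cases "x = 0 \<or> y = 0")
    case True
    then show ?thesis using hnn by (auto simp: hhom[of 0 0, simplified] h_def)
  next
    case False
    then have x: "x \<noteq> 0" and y: "y \<noteq> 0" by auto
    define a b where "a = h x" "b = h y"
    have a: "a > 0" and b: "b > 0" using hpos x y a_b_def by auto
    have hx: "h ((1/a) *\<^sub>R x) = 1" using a by (simp add: hhom a_b_def)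
    have hy: "h ((1/b) *\<^sub>R y) = 1" using b by (simp add: hhom a_b_def)
    define X where "X = (1/a) *\<^sub>R x"
    define Y where "Y = (1/b) *\<^sub>R y"
    define Z where "Z = (a/(a+b)) *\<^sub>R X + (b/(a+b)) *\<^sub>R Y"
    have cx: "C * \<phi> X \<le> 1" using hx lev[of X] unfolding X_def by simp
    have cy: "C * \<phi> Y \<le> 1" using hy lev[of Y] unfolding Y_def by simp
    have ab1: "a/(a+b) + b/(a+b) = 1" using a b by (simp add: add_divide_distrib[symmetric])
    have "\<phi> Z \<le> (a/(a+b)) * \<phi> X + (b/(a+b)) * \<phi> Y"
      unfolding Z_def using cvx a b ab1 unfolding convex_on_def
      by (metis UNIV_I divide_nonneg_pos less_imp_le add_pos_pos)
    then have "C * \<phi> Z \<le> C * ((a/(a+b)) * \<phi> X + (b/(a+b)) * \<phi> Y)"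
      using C by (rule mult_left_mono[OF _ less_imp_le])
    also have "\<dots> = (a/(a+b)) * (C * \<phi> X) + (b/(a+b)) * (C * \<phi> Y)"
      by (simp only: distrib_left mult.left_commute)
    also have "\<dots> \<le> (a/(a+b)) * 1 + (b/(a+b)) * 1"
      by (rule add_mono; rule mult_left_mono) (use cx cy a b in auto)
    also have "\<dots> = 1" using ab1 by simp
    finally have "h Z \<le> 1" using lev[of Z] by simp
    moreover have "Z = (1/(a+b)) *\<^sub>R (x + y)"
      unfolding Z_def X_def Y_def using a b by (simp add: scaleR_add_right)
    ultimately have "(1/(a+b)) * h (x + y) \<le> 1" using a b hhom[of "1/(a+b)" "x+y"] by simp
    then show ?thesis using a b a_b_def by (simp add: field_simps)
  qed
  show ?thesis
    by (unfold_locales) (use hhom sub hpos in \<open>auto simp: h_def\<close>)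
qed

context gauge_fn begin

lemma polar_eq: "polar {z. \<forall>x. z \<bullet> x \<le> h x} = {x. h x \<le> 1}"
proof (intro set_eqI iffI)
  fix x assume x: "x \<in> {x. h x \<le> 1}"
  show "x \<in> polar {z. \<forall>x. z \<bullet> x \<le> h x}"
    unfolding polar_def
  proof (intro CollectI ballI)
    fix z assume "z \<in> {z. \<forall>x. z \<bullet> x \<le> h x}"
    then have "z \<bullet> x \<le> h x" by simp
    then show "x \<bullet> z \<le> 1" using x by (simp add: inner_commute)
  qed
next
  fix x assume x: "x \<in> polar {z. \<forall>x. z \<bullet> x \<le> h x}"
  show "x \<in> {x. h x \<le> 1}"
  proof (rule ccontr)
    assume nx: "x \<notin> {x. h x \<le> 1}"
    have cvxS: "convex {x. h x \<le> 1}"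
      unfolding convex_def
    proof (intro ballI allI impI CollectI)
      fix x y :: "real^'n" and u v :: real
      assume xy: "x \<in> {x. h x \<le> 1}" "y \<in> {x. h x \<le> 1}" and uv: "0 \<le> u" "0 \<le> v" "u + v = 1"
      have "h (u *\<^sub>R x + v *\<^sub>R y) \<le> u * h x + v * h y"
        using convex uv unfolding convex_on_def by blast
      also have "\<dots> \<le> u * 1 + v * 1"
        using xy uv by (intro add_mono mult_left_mono) auto
      finally show "h (u *\<^sub>R x + v *\<^sub>R y) \<le> 1" using uv by simp
    qed
    have clS: "closed {x. h x \<le> 1}"
      using continuous by (intro closed_Collect_le) (auto intro: continuous_on_const)
    obtain a b where ab: "a \<bullet> x < b" "\<forall>y\<in>{x. h x \<le> 1}. b < a \<bullet> y"
      using separating_hyperplane_closed_point[OF cvxS clS nx] by blast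
    have b: "b < 0" using ab(2)[rule_format, of 0] by simp
    define z where "z = (1/b) *\<^sub>R a"
    have zx: "z \<bullet> x > 1" using ab(1) b by (simp add: z_def divide_less_eq)
    have "z \<in> {z. \<forall>x. z \<bullet> x \<le> h x}"
    proof (intro CollectI allI)
      fix y show "z \<bullet> y \<le> h y"
      proof (cases "y = 0")
        case False
        then have hy: "h y > 0" by (rule pos)
        have "h ((1 / h y) *\<^sub>R y) = 1" using hy by (simp add: hom)
        then have "b < a \<bullet> ((1 / h y) *\<^sub>R y)" using ab(2)[rule_format, of "(1 / h y) *\<^sub>R y"] by simp
        then have "b * h y < a \<bullet> y" using hy by (simp add: less_divide_eq mult.commute)
        then have "(a \<bullet> y) / b < h y" using b by (simp add: neg_divide_less_eq mult.commute)
        then show ?thesis by (simp add: z_def)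
      qed simp
    qed
    then have "x \<bullet> z \<le> 1" using x unfolding polar_def by blast
    then show False using zx by (simp add: inner_commute)
  qed
qed

lemma sublevel_starset: "{x. h x \<le> 1} = starset (\<lambda>u. inverse (h u))"
proof -
  have nn: "\<forall>u\<in>sphere (0::real^'n) 1. 0 \<le> inverse (h u)" using nonneg by simp
  have key: "h x \<le> 1 \<longleftrightarrow> norm x \<le> inverse (h (sgn x))" if x: "x \<noteq> 0" for x
  proof -
    have hs: "h (sgn x) > 0" using x by (intro pos) (simp add: sgn_zero_iff)
    have xs: "x = norm x *\<^sub>R sgn x" using x by (simp add: sgn_div_norm)
    have "h x = norm x * h (sgn x)" by (subst xs) (simp add: hom)
    then show ?thesis using hs by (simp add: field_simps)
  qed
  show ?thesis unfolding starset_eq[OF nn]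
  proof (intro set_eqI)
    fix x :: "real^'n"
    show "(x \<in> {x. h x \<le> 1}) = (x \<in> {x. x = 0 \<or> norm x \<le> inverse (h (sgn x))})"
      by (cases "x = 0") (use key in auto)
  qed
qed

end

lemma sphere_nonempty: "sphere (0::real^'n) 1 \<noteq> {}"
proof -
  obtain u :: "real^'n" where "norm u = 1" using vector_choose_size[of 1] by auto
  then show ?thesis by auto
qed

context gauge_fn begin

lemma sphere_bounds: "\<exists>m M. 0 < m \<and> (\<forall>u\<in>sphere 0 1. m \<le> h u \<and> h u \<le> M)"
proof -
  have c: "continuous_on (sphere 0 1) h" using continuous by (rule continuous_on_subset) simp
  obtain x0 where x0: "x0 \<in> sphere (0::real^'n) 1" "\<forall>y\<in>sphere 0 1. h x0 \<le> h y"
    using continuous_attains_inf[OF compact_sphere sphere_nonempty c] by blast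
  obtain x1 where x1: "x1 \<in> sphere (0::real^'n) 1" "\<forall>y\<in>sphere 0 1. h y \<le> h x1"
    using continuous_attains_sup[OF compact_sphere sphere_nonempty c] by blast
  have "h x0 > 0" using x0 by (intro pos) auto
  then show ?thesis using x0 x1 by blast
qed

lemma Lstar_sublevel:
  assumes p: "p \<ge> 0"
  shows "Lstar p {x. h x \<le> 1}"
proof -
  obtain m M where mM: "0 < m" "\<forall>u\<in>sphere (0::real^'n) 1. m \<le> h u \<and> h u \<le> M"
    using sphere_bounds by blast
  interpret sp: finite_measure "sphere_prob :: (real^'n) measure" by (rule finite_measure_sphere_prob)
  show ?thesis unfolding Lstar_def
  proof (intro exI[of _ "\<lambda>u. inverse (h u)"] conjI)
    show "(\<lambda>u. inverse (h u)) \<in> borel_measurable sphere_prob"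
      by (simp add: measurable_cong_sets[OF sets_sphere_prob refl])
    show "\<forall>u\<in>sphere 0 1. 0 \<le> inverse (h u)" using nonneg by simp
    show "integrable sphere_prob (\<lambda>u. inverse (h u) powr (real CARD('n) + p))"
    proof (rule sp.integrable_const_bound[where B="(1/m) powr (real CARD('n) + p)"])
      show "AE u in sphere_prob. norm (inverse (h u) powr (real CARD('n) + p)) \<le> (1/m) powr (real CARD('n) + p)"
        using AE_sphere_prob
      proof (rule AE_mp, intro AE_I2 impI)
        fix u :: "real^'n" assume "norm u = 1"
        then have "m \<le> h u" using mM by auto
        then have "inverse (h u) \<le> 1/m" using mM by (simp add: field_simps)
        then show "norm (inverse (h u) powr (real CARD('n) + p)) \<le> (1/m) powr (real CARD('n) + p)"
          using p nonneg[of u] by (simp add: powr_mono2)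
      qed
      show "(\<lambda>u. inverse (h u) powr (real CARD('n) + p)) \<in> borel_measurable sphere_prob"
        by (simp add: measurable_cong_sets[OF sets_sphere_prob refl])
    qed
    show "{x. h x \<le> 1} = {r *\<^sub>R u |r u. u \<in> sphere 0 1 \<and> 0 \<le> r \<and> r \<le> inverse (h u)}"
      using sublevel_starset unfolding starset_def .
  qed
qed

end

lemma integrable_powr_N:
  fixes \<rho> :: "real^'n \<Rightarrow> real"
  assumes [measurable]: "\<rho> \<in> borel_measurable borel" and p: "p \<ge> 0"
    and nn: "\<forall>u\<in>sphere (0::real^'n) 1. 0 \<le> \<rho> u"
    and int: "integrable sphere_prob (\<lambda>u. \<rho> u powr (real CARD('n) + p))"
  shows "integrable sphere_prob (\<lambda>u. \<rho> u powr (real CARD('n)))"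
proof -
  interpret sp: finite_measure "sphere_prob :: (real^'n) measure" by (rule finite_measure_sphere_prob)
  have "integrable sphere_prob (\<lambda>u. 1 + \<rho> u powr (real CARD('n) + p))"
    using int by (intro Bochner_Integration.integrable_add) auto
  moreover have "(\<lambda>u. \<rho> u powr (real CARD('n))) \<in> borel_measurable sphere_prob"
      by (simp add: measurable_cong_sets[OF sets_sphere_prob refl])
  moreover have "AE u in sphere_prob. norm (\<rho> u powr (real CARD('n))) \<le> norm (1 + \<rho> u powr (real CARD('n) + p))"
    using AE_sphere_prob
    proof (rule AE_mp, intro AE_I2 impI)
      fix u :: "real^'n" assume "norm u = 1"
      then have r0: "0 \<le> \<rho> u" using nn by auto
      show "norm (\<rho> u powr (real CARD('n))) \<le> norm (1 + \<rho> u powr (real CARD('n) + p))"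
      proof (cases "\<bar>\<rho> u\<bar> \<le> 1")
        case True
        then have "\<rho> u powr (real CARD('n)) \<le> 1"
          unfolding powr_def by (auto intro!: powr_le1 simp: powr_def[symmetric]) 
        then have "\<rho> u powr (real CARD('n)) \<le> 1 + \<rho> u powr (real CARD('n) + p)"
          using powr_ge_zero[of "\<rho> u" "real CARD('n) + p"] by linarith
        then show ?thesis by simp
      next
        case False
        then have "\<rho> u powr (real CARD('n)) \<le> \<rho> u powr (real CARD('n) + p)"
          using p r0 by (intro powr_mono) auto
        then show ?thesis by simp
      qed
    qed
  ultimately show ?thesis by (rule Bochner_Integration.integrable_bound)
qed

lemma star_volume:
  fixes \<rho> :: "real^'n \<Rightarrow> real"
  assumes nn: "\<forall>u\<in>sphere (0::real^'n) 1. 0 \<le> \<rho> u" and [measurable]: "\<rho> \<in> borel_measurable borel"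
    and int: "integrable sphere_prob (\<lambda>u. \<rho> u powr (real CARD('n)))"
  shows "emeasure lborel (starset \<rho>) = ennreal (measure lborel (ball (0::real^'n) 1) * (\<integral>u. \<rho> u powr (real CARD('n)) \<partial>sphere_prob))"
    and "vol (starset \<rho>) = measure lborel (ball (0::real^'n) 1) * (\<integral>u. \<rho> u powr (real CARD('n)) \<partial>sphere_prob)"
proof -
  have [measurable]: "starset \<rho> \<in> sets borel" by (rule starset_borel[OF nn]) simp
  have "emeasure lborel (starset \<rho>) = (\<integral>\<^sup>+x. indicator (starset \<rho>) x * ennreal 1 \<partial>lborel)"
    by simp
  also have "\<dots> = emeasure lborel (ball (0::real^'n) 1) *
    (\<integral>\<^sup>+u. ennreal (CARD('n) / (CARD('n) + (0::real)) * \<rho> u powr (CARD('n) + (0::real)) * 1) \<partial>sphere_prob)"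
    by (rule star_integral[OF nn]) auto
  also have "(\<integral>\<^sup>+u. ennreal (CARD('n) / (CARD('n) + (0::real)) * \<rho> u powr (CARD('n) + (0::real)) * 1) \<partial>sphere_prob)
     = ennreal (\<integral>u. \<rho> u powr (real CARD('n)) \<partial>sphere_prob)"
    using int by (simp add: nn_integral_eq_integral)
  also have "emeasure lborel (ball (0::real^'n) 1) = ennreal (measure lborel (ball (0::real^'n) 1))"
    using emeasure_lborel_ball_finite[of "0::real^'n" 1] by (simp add: emeasure_eq_ennreal_measure)
  finally show e: "emeasure lborel (starset \<rho>) = ennreal (measure lborel (ball (0::real^'n) 1) * (\<integral>u. \<rho> u powr (real CARD('n)) \<partial>sphere_prob))"
    by (simp add: ennreal_mult integral_nonneg_AE)
  have "vol (starset \<rho>) = measure lborel (starset \<rho>)" unfolding vol_def by simp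
  also have "\<dots> = measure lborel (ball (0::real^'n) 1) * (\<integral>u. \<rho> u powr (real CARD('n)) \<partial>sphere_prob)"
    unfolding measure_def e by (simp add: integral_nonneg_AE)
  finally show "vol (starset \<rho>) = measure lborel (ball (0::real^'n) 1) * (\<integral>u. \<rho> u powr (real CARD('n)) \<partial>sphere_prob)" .
qed

lemma brack_measurable[measurable (raw)]:
  fixes f g :: "'a \<Rightarrow> real^'n"
  assumes [measurable]: "f \<in> borel_measurable M" "g \<in> borel_measurable M"
  shows "(\<lambda>x. brack (f x) (g x)) \<in> borel_measurable M"
  unfolding brack_def by measurable

lemma AE_brack_nonzero:
  fixes x :: "real^'n"
  assumes x: "x \<noteq> 0" and N: "CARD('n) \<ge> 2"
  shows "AE v in sphere_prob. brack x v \<noteq> 0"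
proof -
  have "dim (span {x}) < DIM(real^'n)"
  proof -
    have "dim (span {x}) \<le> 1" using dim_le_card[of "{x}" "span {x}"] by (simp add: span_superset)
    then show ?thesis using N by simp
  qed
  then have "negligible (span {x})" by (rule negligible_lowdim)
  then have nul: "span {x} \<in> null_sets lebesgue" by (simp add: negligible_iff_null_sets)
  have "AE y in lebesgue. y \<notin> span {x}"
    by (rule AE_I'[OF nul]) auto
  then have "AE y in lebesgue. y \<in> ball 0 1 \<longrightarrow> brack x (sgn y) \<noteq> 0"
  proof (rule AE_mp, intro AE_I2 impI)
    fix y :: "real^'n" assume y: "y \<notin> span {x}"
    then have y0: "y \<noteq> 0" using span_zero by auto
    have "brack x y \<noteq> 0" using brack_zero_span[OF x y0] y by blast
    moreover have "brack x (sgn y) = brack x y / norm y"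
      by (simp add: sgn_div_norm brack_scale_right divide_inverse_commute)
    ultimately show "brack x (sgn y) \<noteq> 0" using y0 by simp
  qed
  then have "AE y in uniform_measure lebesgue (ball 0 1). brack x (sgn y) \<noteq> 0"
    by (intro AE_uniform_measureI) auto
  then show ?thesis unfolding sphere_prob_def
    by (subst AE_distr_iff) (auto simp: measurable_completion measurable_cong_sets[OF sets_uniform_measure refl])
qed

definition PhiS :: "real \<Rightarrow> (real^'n \<Rightarrow> real) \<Rightarrow> real^'n \<Rightarrow> real" where
  "PhiS p \<rho> x = (\<integral>v. \<rho> v powr (real CARD('n) + p) * brack x v powr p \<partial>sphere_prob)"

lemma omega_pos: "s \<ge> 0 \<Longrightarrow> omega s > 0"
  unfolding omega_def by (intro divide_pos_pos) auto

lemma ctilde_pos: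
  assumes "n \<ge> 2" "p \<ge> 1"
  shows "ctilde n p > 0"
proof -
  have "real n \<ge> 2" using assms by simp
  then show ?thesis unfolding ctilde_def using assms
    by (intro divide_pos_pos mult_pos_pos omega_pos) auto
qed

lemma wB_pos: "measure lborel (ball (0::real^'n) 1) > 0"
  using ball_pos[where 'n='n] emeasure_lborel_ball_finite[of "0::real^'n" 1]
  by (simp add: emeasure_eq_ennreal_measure)

locale star_data =
  fixes p :: real and \<rho> :: "real^'n \<Rightarrow> real"
  assumes p: "p \<ge> 1" and N2: "CARD('n) \<ge> 2"
    and meas[measurable]: "\<rho> \<in> borel_measurable borel"
    and nn: "\<forall>u\<in>sphere (0::real^'n) 1. 0 \<le> \<rho> u"
    and int: "integrable sphere_prob (\<lambda>u. \<rho> u powr (real CARD('n) + p))"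
    and volpos: "vol (starset \<rho>) > 0"
begin

lemma intN: "integrable sphere_prob (\<lambda>u. \<rho> u powr (real CARD('n)))"
  by (rule integrable_powr_N[OF meas _ nn int]) (use p in auto)

definition "kk = (\<integral>u. \<rho> u powr (real CARD('n)) \<partial>sphere_prob)"

lemma vol_eq: "vol (starset \<rho>) = measure lborel (ball (0::real^'n) 1) * kk"
  unfolding kk_def by (rule star_volume(2)[OF nn meas intN])

lemma kk_pos: "kk > 0"
  using volpos wB_pos[where 'n='n] vol_eq by (simp add: zero_less_mult_iff)

lemma integrand_int: "integrable sphere_prob (\<lambda>v. \<rho> v powr (real CARD('n) + p) * brack x v powr p)"
proof -
  have "integrable sphere_prob (\<lambda>v. norm x powr p * \<rho> v powr (real CARD('n) + p))"
    using int by simp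
  moreover have "(\<lambda>v. \<rho> v powr (real CARD('n) + p) * brack x v powr p) \<in> borel_measurable sphere_prob"
    by (simp add: measurable_cong_sets[OF sets_sphere_prob refl])
  moreover have "AE v in sphere_prob. norm (\<rho> v powr (real CARD('n) + p) * brack x v powr p) \<le> norm (norm x powr p * \<rho> v powr (real CARD('n) + p))"
    using AE_sphere_prob
  proof (rule AE_mp, intro AE_I2 impI)
    fix v :: "real^'n" assume v: "norm v = 1"
    have "brack x v \<le> norm x" using brack_le[of x v] v by simp
    then have "brack x v powr p \<le> norm x powr p" using p by (intro powr_mono2) auto
    then show "norm (\<rho> v powr (real CARD('n) + p) * brack x v powr p) \<le> norm (norm x powr p * \<rho> v powr (real CARD('n) + p))"
      by (simp add: mult.commute mult_right_mono)
  qed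
  ultimately show ?thesis by (rule Bochner_Integration.integrable_bound)
qed

lemma Phi_nonneg: "PhiS p \<rho> x \<ge> 0"
  unfolding PhiS_def by (intro integral_nonneg_AE) auto

lemma Phi_hom: "PhiS p \<rho> (t *\<^sub>R x) = \<bar>t\<bar> powr p * PhiS p \<rho> x"
proof -
  have "PhiS p \<rho> (t *\<^sub>R x) = (\<integral>v. \<bar>t\<bar> powr p * (\<rho> v powr (real CARD('n) + p) * brack x v powr p) \<partial>sphere_prob)"
    unfolding PhiS_def by (intro Bochner_Integration.integral_cong) (auto simp: brack_scale_left powr_mult mult_ac)
  also have "\<dots> = \<bar>t\<bar> powr p * PhiS p \<rho> x" unfolding PhiS_def by simp
  finally show ?thesis .
qed

lemma Phi_convex: "convex_on UNIV (PhiS p \<rho>)"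
  unfolding convex_on_def
proof (intro conjI ballI allI impI)
  fix x y :: "real^'n" and u v :: real assume uv: "0 \<le> u" "0 \<le> v" "u + v = 1"
  have "PhiS p \<rho> (u *\<^sub>R x + v *\<^sub>R y) \<le> (\<integral>w. u * (\<rho> w powr (real CARD('n) + p) * brack x w powr p) + v * (\<rho> w powr (real CARD('n) + p) * brack y w powr p) \<partial>sphere_prob)"
    unfolding PhiS_def
  proof (rule integral_mono)
    show "integrable sphere_prob (\<lambda>w. \<rho> w powr (real CARD('n) + p) * brack (u *\<^sub>R x + v *\<^sub>R y) w powr p)"
      by (rule integrand_int)
    show "integrable sphere_prob (\<lambda>w. u * (\<rho> w powr (real CARD('n) + p) * brack x w powr p) + v * (\<rho> w powr (real CARD('n) + p) * brack y w powr p))"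
      using integrand_int[of x] integrand_int[of y] by auto
    fix w :: "real^'n"
    have "brack (u *\<^sub>R x + v *\<^sub>R y) w \<le> brack (u *\<^sub>R x) w + brack (v *\<^sub>R y) w" by (rule brack_triangle)
    also have "\<dots> = (1 - v) * brack x w + v * brack y w" using uv by (simp add: brack_scale_left)
    finally have "brack (u *\<^sub>R x + v *\<^sub>R y) w powr p \<le> ((1 - v) * brack x w + v * brack y w) powr p"
      using p by (intro powr_mono2) auto
    also have "\<dots> \<le> (1 - v) * brack x w powr p + v * brack y w powr p"
      using p uv by (intro powr_convex0) auto
    finally have "brack (u *\<^sub>R x + v *\<^sub>R y) w powr p \<le> u * brack x w powr p + v * brack y w powr p"
      using uv by (metis add_diff_cancel_right')
    then have "\<rho> w powr (real CARD('n) + p) * brack (u *\<^sub>R x + v *\<^sub>R y) w powr p \<le> \<rho> w powr (real CARD('n) + p) * (u * brack x w powr p + v * brack y w powr p)"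
      by (rule mult_left_mono) simp
    then show "\<rho> w powr (real CARD('n) + p) * brack (u *\<^sub>R x + v *\<^sub>R y) w powr p \<le> u * (\<rho> w powr (real CARD('n) + p) * brack x w powr p) + v * (\<rho> w powr (real CARD('n) + p) * brack y w powr p)"
      by (simp add: algebra_simps)
  qed
  also have "\<dots> = u * PhiS p \<rho> x + v * PhiS p \<rho> y"
    unfolding PhiS_def using integrand_int[of x] integrand_int[of y] by simp
  finally show "PhiS p \<rho> (u *\<^sub>R x + v *\<^sub>R y) \<le> u * PhiS p \<rho> x + v * PhiS p \<rho> y" .
qed simp

lemma Phi_pos:
  assumes x: "x \<noteq> 0"
  shows "PhiS p \<rho> x > 0"
proof (rule ccontr)
  assume "\<not> PhiS p \<rho> x > 0"
  then have "PhiS p \<rho> x = 0" using Phi_nonneg[of x] by simp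
  then have "AE v in sphere_prob. \<rho> v powr (real CARD('n) + p) * brack x v powr p = 0"
    unfolding PhiS_def using integrand_int[of x] by (subst (asm) integral_nonneg_eq_0_iff_AE) auto
  then have "AE v in sphere_prob. \<rho> v powr (real CARD('n)) = 0"
    using AE_brack_nonzero[OF x N2]
    by eventually_elim simp
  then have "kk = 0" unfolding kk_def by (simp add: integral_eq_zero_AE)
  then show False using kk_pos by simp
qed

end

context star_data begin

lemma K_borel[measurable]: "starset \<rho> \<in> sets borel"
  by (rule starset_borel[OF nn meas])

lemma J_formula:
  "(LINT y:starset \<rho>|lebesgue. brack x y powr p) =
    measure lborel (ball (0::real^'n) 1) * (CARD('n) / (CARD('n) + p)) * PhiS p \<rho> x"
proof -
  let ?c = "real CARD('n) / (real CARD('n) + p)"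
  have m: "(\<lambda>y. indicator (starset \<rho>) y *\<^sub>R brack x y powr p) \<in> borel_measurable lebesgue"
    by (rule measurable_completion) measurable
  have "(LINT y:starset \<rho>|lebesgue. brack x y powr p) =
      enn2real (\<integral>\<^sup>+y. ennreal (indicator (starset \<rho>) y *\<^sub>R brack x y powr p) \<partial>lebesgue)"
    unfolding set_lebesgue_integral_def by (rule integral_eq_nn_integral[OF m]) (auto simp: indicator_def)
  also have "(\<integral>\<^sup>+y. ennreal (indicator (starset \<rho>) y *\<^sub>R brack x y powr p) \<partial>lebesgue) =
      (\<integral>\<^sup>+y. indicator (starset \<rho>) y * ennreal (brack x y powr p) \<partial>lborel)"
    unfolding nn_integral_completion by (intro nn_integral_cong) (simp add: indicator_def)
  also have "\<dots> = emeasure lborel (ball (0::real^'n) 1) *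
      (\<integral>\<^sup>+u. ennreal (?c * \<rho> u powr (real CARD('n) + p) * brack x u powr p) \<partial>sphere_prob)"
  proof (rule star_integral[OF nn meas])
    fix u :: "real^'n" and s :: real assume "norm u = 1" "s > 0"
    then show "brack x (s *\<^sub>R u) powr p = s powr p * brack x u powr p"
      by (simp add: brack_scale_right powr_mult)
  qed (use p in auto)
  also have "(\<integral>\<^sup>+u. ennreal (?c * \<rho> u powr (real CARD('n) + p) * brack x u powr p) \<partial>sphere_prob) =
      ennreal ?c * (\<integral>\<^sup>+u. ennreal (\<rho> u powr (real CARD('n) + p) * brack x u powr p) \<partial>sphere_prob)"
  proof -
    have "\<And>u. ennreal (?c * \<rho> u powr (real CARD('n) + p) * brack x u powr p) = ennreal ?c * ennreal (\<rho> u powr (real CARD('n) + p) * brack x u powr p)"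
      using p by (subst ennreal_mult[symmetric]) (auto simp: mult_ac)
    then show ?thesis
      by (simp add: nn_integral_cmult measurable_cong_sets[OF sets_sphere_prob refl])
  qed
  also have "(\<integral>\<^sup>+u. ennreal (\<rho> u powr (real CARD('n) + p) * brack x u powr p) \<partial>sphere_prob) = ennreal (PhiS p \<rho> x)"
    unfolding PhiS_def by (rule nn_integral_eq_integral[OF integrand_int]) auto
  also have "emeasure lborel (ball (0::real^'n) 1) = ennreal (measure lborel (ball (0::real^'n) 1))"
    using emeasure_lborel_ball_finite[of "0::real^'n" 1] by (simp add: emeasure_eq_ennreal_measure)
  finally show ?thesis
    using p Phi_nonneg[of x] by (simp add: enn2real_mult mult_ac)
qed

definition "CK = real CARD('n) / ((real CARD('n) + p) * ctilde CARD('n) p * kk)"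

lemma CK_pos: "CK > 0"
  unfolding CK_def using ctilde_pos[OF N2 p] kk_pos p by (intro divide_pos_pos mult_pos_pos) auto

lemma hLambda_eq: "hLambda p (starset \<rho>) x = (CK * PhiS p \<rho> x) powr (1 / p)"
proof -
  have "(1 / (ctilde CARD('n) p * vol (starset \<rho>))) * (LINT y:starset \<rho>|lebesgue. brack x y powr p) = CK * PhiS p \<rho> x"
    unfolding J_formula vol_eq CK_def using wB_pos[where 'n='n] by (simp add: field_simps)
  then show ?thesis unfolding hLambda_def by simp
qed

lemma gauge: "gauge_fn (hLambda p (starset \<rho>))"
proof -
  have "gauge_fn (\<lambda>x. (CK * PhiS p \<rho> x) powr (1 / p))"
    by (rule gauge_from_power[OF p CK_pos Phi_nonneg Phi_hom Phi_convex Phi_pos])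
  moreover have "hLambda p (starset \<rho>) = (\<lambda>x. (CK * PhiS p \<rho> x) powr (1 / p))"
    by (rule ext) (rule hLambda_eq)
  ultimately show ?thesis by simp
qed

lemma hLambda_pow: "hLambda p (starset \<rho>) x powr p = CK * PhiS p \<rho> x"
  using CK_pos Phi_nonneg[of x] p by (simp add: hLambda_eq powr_powr)

end

lemma young_scalar:
  fixes N p x :: real
  assumes N: "N \<ge> 1" and p: "p > 0" and x: "x \<ge> 0" and x1: "x \<noteq> 1"
  shows "(N + p) * x powr N < N * x powr (N + p) + p"
proof -
  define \<phi> where "\<phi> t = N * t powr (N + p) + p - (N + p) * t powr N" for t :: real
  have d: "DERIV \<phi> t :> N * (N + p) * t powr (N - 1) * (t powr p - 1)" if t: "t > 0" for t
  proof -
    have "DERIV \<phi> t :> N * ((N + p) * t powr (N + p - 1)) - (N + p) * (N * t powr (N - 1))"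
      unfolding \<phi>_def using t by (auto intro!: derivative_eq_intros)
    moreover have "t powr (N + p - 1) = t powr (N - 1) * t powr p"
      using t by (simp add: powr_add[symmetric] algebra_simps)
    ultimately show ?thesis by (simp add: algebra_simps)
  qed
  have cont: "continuous_on {a..b} \<phi>" if "0 < a" for a b
    unfolding \<phi>_def using that by (intro continuous_intros) auto
  have phi1: "\<phi> 1 = 0" unfolding \<phi>_def by simp
  have "\<phi> x > 0"
  proof (cases "x = 0")
    case True then show ?thesis using p N by (simp add: \<phi>_def)
  next
    case False
    then have x0: "x > 0" using x by simp
    show ?thesis
    proof (cases "x < 1")
      case True
      have "\<phi> x > \<phi> 1"
      proof (rule DERIV_neg_imp_decreasing_open[OF True _ cont[OF x0]])
        fix t assume t: "x < t" "t < 1"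
        then have t0: "t > 0" using x0 by simp
        have "t powr p < 1 powr p" using t t0 p by (intro powr_less_mono2) auto
        then have "N * (N + p) * t powr (N - 1) * (t powr p - 1) < 0"
          using t0 N p by (intro mult_pos_neg) auto
        then show "\<exists>y. DERIV \<phi> t :> y \<and> y < 0" using d[OF t0] by blast
      qed
      then show ?thesis using phi1 by simp
    next
      case False
      then have x1': "1 < x" using x1 by simp
      have "\<phi> 1 < \<phi> x"
      proof (rule DERIV_pos_imp_increasing_open[OF x1' _ cont])
        fix t assume t: "1 < t" "t < x"
        then have t0: "t > 0" by simp
        have "1 powr p < t powr p" using t p by (intro powr_less_mono2) auto
        then have "N * (N + p) * t powr (N - 1) * (t powr p - 1) > 0"
          using t0 N p by (intro mult_pos_pos) auto
        then show "\<exists>y. DERIV \<phi> t :> y \<and> y > 0" using d[OF t0] by blast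
      qed simp
      then show ?thesis using phi1 by simp
    qed
  qed
  then show ?thesis unfolding \<phi>_def by simp
qed

lemma young_ineq:
  fixes N p a b :: real
  assumes N: "N \<ge> 1" and p: "p > 0" and a: "a \<ge> 0" and b: "b > 0"
  shows "(N + p) * a powr N \<le> N * a powr (N + p) * (1 / b) powr p + p * b powr N"
    and "a \<noteq> b \<Longrightarrow> (N + p) * a powr N < N * a powr (N + p) * (1 / b) powr p + p * b powr N"
proof -
  define x where "x = a / b"
  have x: "x \<ge> 0" using a b by (simp add: x_def)
  have ax: "a = x * b" using b by (simp add: x_def)
  have e1: "a powr N = x powr N * b powr N" using ax x b by (simp add: powr_mult)
  have e2: "a powr (N + p) * (1 / b) powr p = x powr (N + p) * b powr N"
  proof -
    have "a powr (N + p) * (1 / b) powr p = x powr (N + p) * (b powr (N + p) * (1 / b) powr p)"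
      using ax x b by (simp add: powr_mult)
    also have "b powr (N + p) * (1 / b) powr p = b powr N"
      using b by (simp add: powr_add powr_divide)
    finally show ?thesis .
  qed
  have bN: "b powr N > 0" using b by simp
  have gen: "(N + p) * a powr N \<le> N * a powr (N + p) * (1 / b) powr p + p * b powr N \<and>
    (a \<noteq> b \<longrightarrow> (N + p) * a powr N < N * a powr (N + p) * (1 / b) powr p + p * b powr N)"
  proof (cases "x = 1")
    case True
    then have "a = b" using ax by simp
    then show ?thesis using b by (simp add: powr_add powr_divide algebra_simps)
  next
    case False
    have "(N + p) * x powr N < N * x powr (N + p) + p" by (rule young_scalar[OF N p x False])
    then have "(N + p) * x powr N * b powr N < (N * x powr (N + p) + p) * b powr N"
      using bN by (rule mult_strict_right_mono)
    then have "(N + p) * a powr N < N * a powr (N + p) * (1 / b) powr p + p * b powr N"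
      unfolding e1 mult.assoc[of N] e2 by (simp add: algebra_simps)
    then show ?thesis by simp
  qed
  then show "(N + p) * a powr N \<le> N * a powr (N + p) * (1 / b) powr p + p * b powr N"
    and "a \<noteq> b \<Longrightarrow> (N + p) * a powr N < N * a powr (N + p) * (1 / b) powr p + p * b powr N" by auto
qed

definition Ipair :: "real \<Rightarrow> (real^'n \<Rightarrow> real) \<Rightarrow> (real^'n \<Rightarrow> real) \<Rightarrow> real" where
  "Ipair p a b = (\<integral>u. a u powr (real CARD('n) + p) * PhiS p b u \<partial>sphere_prob)"

lemma pair_sigma_finite_sphere: "pair_sigma_finite (sphere_prob :: (real^'n) measure) (sphere_prob :: (real^'n) measure)"
proof -
  interpret sp: finite_measure "sphere_prob :: (real^'n) measure" by (rule finite_measure_sphere_prob)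
  show ?thesis by (simp add: pair_sigma_finite_def sp.sigma_finite_measure_axioms)
qed

lemma Ipair_nn:
  fixes a b :: "real^'n \<Rightarrow> real"
  assumes [measurable]: "a \<in> borel_measurable borel" and sb: "star_data p b"
  shows "Ipair p a b = enn2real (\<integral>\<^sup>+u. (\<integral>\<^sup>+v. ennreal (a u powr (real CARD('n) + p) * b v powr (real CARD('n) + p) * brack u v powr p) \<partial>sphere_prob) \<partial>sphere_prob)"
proof -
  interpret sp: finite_measure "sphere_prob :: (real^'n) measure" by (rule finite_measure_sphere_prob)
  interpret B: star_data p b by (rule sb)
  have mPhi: "(\<lambda>u. PhiS p b u) \<in> borel_measurable (sphere_prob :: (real^'n) measure)"
    unfolding PhiS_def
    by (rule sp.borel_measurable_lebesgue_integral) (simp add: measurable_cong_sets[OF sets_pair_measure_cong[OF sets_sphere_prob sets_sphere_prob] refl])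
  have "Ipair p a b = enn2real (\<integral>\<^sup>+u. ennreal (a u powr (real CARD('n) + p) * PhiS p b u) \<partial>sphere_prob)"
    unfolding Ipair_def
    by (rule integral_eq_nn_integral) (use mPhi B.Phi_nonneg in \<open>auto simp: measurable_cong_sets[OF sets_sphere_prob refl]\<close>)
  also have "(\<integral>\<^sup>+u. ennreal (a u powr (real CARD('n) + p) * PhiS p b u) \<partial>sphere_prob) =
      (\<integral>\<^sup>+u. (\<integral>\<^sup>+v. ennreal (a u powr (real CARD('n) + p) * b v powr (real CARD('n) + p) * brack u v powr p) \<partial>sphere_prob) \<partial>sphere_prob)"
  proof (rule nn_integral_cong)
    fix u :: "real^'n"
    have "ennreal (PhiS p b u) = (\<integral>\<^sup>+v. ennreal (b v powr (real CARD('n) + p) * brack u v powr p) \<partial>sphere_prob)"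
      unfolding PhiS_def by (rule nn_integral_eq_integral[OF B.integrand_int, symmetric]) auto
    then have "ennreal (a u powr (real CARD('n) + p) * PhiS p b u) =
        ennreal (a u powr (real CARD('n) + p)) * (\<integral>\<^sup>+v. ennreal (b v powr (real CARD('n) + p) * brack u v powr p) \<partial>sphere_prob)"
      using B.Phi_nonneg[of u] by (simp add: ennreal_mult)
    also have "\<dots> = (\<integral>\<^sup>+v. ennreal (a u powr (real CARD('n) + p)) * ennreal (b v powr (real CARD('n) + p) * brack u v powr p) \<partial>sphere_prob)"
      by (rule nn_integral_cmult[symmetric]) (simp add: measurable_cong_sets[OF sets_sphere_prob refl])
    also have "\<dots> = (\<integral>\<^sup>+v. ennreal (a u powr (real CARD('n) + p) * b v powr (real CARD('n) + p) * brack u v powr p) \<partial>sphere_prob)"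
      by (simp add: ennreal_mult mult.assoc)
    finally show "ennreal (a u powr (real CARD('n) + p) * PhiS p b u) =
        (\<integral>\<^sup>+v. ennreal (a u powr (real CARD('n) + p) * b v powr (real CARD('n) + p) * brack u v powr p) \<partial>sphere_prob)" .
  qed
  finally show ?thesis .
qed

lemma Ipair_sym:
  fixes a b :: "real^'n \<Rightarrow> real"
  assumes sa: "star_data p a" and sb: "star_data p b"
  shows "Ipair p a b = Ipair p b a"
proof -
  interpret A: star_data p a by (rule sa)
  interpret B: star_data p b by (rule sb)
  interpret pp: pair_sigma_finite "sphere_prob :: (real^'n) measure" "sphere_prob :: (real^'n) measure"
    by (rule pair_sigma_finite_sphere)
  have m: "(\<lambda>(u, v). ennreal (a u powr (real CARD('n) + p) * b v powr (real CARD('n) + p) * brack u v powr p))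
      \<in> borel_measurable (sphere_prob \<Otimes>\<^sub>M sphere_prob)"
    by (simp add: measurable_cong_sets[OF sets_pair_measure_cong[OF sets_sphere_prob sets_sphere_prob] refl])
  have "(\<integral>\<^sup>+u. (\<integral>\<^sup>+v. ennreal (a u powr (real CARD('n) + p) * b v powr (real CARD('n) + p) * brack u v powr p) \<partial>sphere_prob) \<partial>sphere_prob)
     = (\<integral>\<^sup>+v. (\<integral>\<^sup>+u. ennreal (a u powr (real CARD('n) + p) * b v powr (real CARD('n) + p) * brack u v powr p) \<partial>sphere_prob) \<partial>sphere_prob)"
    using pp.Fubini'[OF m] by simp
  also have "\<dots> = (\<integral>\<^sup>+v. (\<integral>\<^sup>+u. ennreal (b v powr (real CARD('n) + p) * a u powr (real CARD('n) + p) * brack v u powr p) \<partial>sphere_prob) \<partial>sphere_prob)"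
    by (simp add: brack_sym mult_ac)
  finally show ?thesis
    using Ipair_nn[OF A.meas sb] Ipair_nn[OF B.meas sa] by simp
qed

context gauge_fn begin

lemma star_data_inv:
  assumes p: "p \<ge> 1" and N2: "CARD('n) \<ge> 2"
  shows "star_data p (\<lambda>u. inverse (h u))"
proof -
  obtain m M where mM: "0 < m" "\<forall>u\<in>sphere (0::real^'n) 1. m \<le> h u \<and> h u \<le> M"
    using sphere_bounds by blast
  interpret sp: finite_measure "sphere_prob :: (real^'n) measure" by (rule finite_measure_sphere_prob)
  obtain \<rho>' where \<rho>': "\<rho>' \<in> borel_measurable sphere_prob" "\<forall>u\<in>sphere 0 1. 0 \<le> \<rho>' u"
    "integrable sphere_prob (\<lambda>u. \<rho>' u powr (real CARD('n) + p))"
    "{x. h x \<le> 1} = {r *\<^sub>R u |r u. u \<in> sphere 0 1 \<and> 0 \<le> r \<and> r \<le> \<rho>' u}"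
    using Lstar_sublevel[of p] p unfolding Lstar_def by auto
  have nn: "\<forall>u\<in>sphere (0::real^'n) 1. 0 \<le> inverse (h u)" using nonneg by simp
  have int: "integrable sphere_prob (\<lambda>u. inverse (h u) powr (real CARD('n) + p))"
  proof (rule sp.integrable_const_bound[where B="(1/m) powr (real CARD('n) + p)"])
    show "AE u in sphere_prob. norm (inverse (h u) powr (real CARD('n) + p)) \<le> (1/m) powr (real CARD('n) + p)"
      using AE_sphere_prob
    proof (rule AE_mp, intro AE_I2 impI)
      fix u :: "real^'n" assume "norm u = 1"
      then have "m \<le> h u" using mM by auto
      then have "inverse (h u) \<le> 1/m" using mM by (simp add: field_simps)
      then show "norm (inverse (h u) powr (real CARD('n) + p)) \<le> (1/m) powr (real CARD('n) + p)"
        using p nonneg[of u] by (simp add: powr_mono2)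
    qed
    show "(\<lambda>u. inverse (h u) powr (real CARD('n) + p)) \<in> borel_measurable sphere_prob"
      by (simp add: measurable_cong_sets[OF sets_sphere_prob refl])
  qed
  have meas: "(\<lambda>u. inverse (h u)) \<in> borel_measurable borel" by measurable
  have intN: "integrable sphere_prob (\<lambda>u. inverse (h u) powr (real CARD('n)))"
    by (rule integrable_powr_N[OF meas _ nn int]) (use p in auto)
  have M0: "M > 0" using mM sphere_nonempty[where 'n='n] by fastforce
  have "(\<integral>u. (1/M) powr (real CARD('n)) \<partial>(sphere_prob::(real^'n) measure)) \<le> (\<integral>u. inverse (h u) powr (real CARD('n)) \<partial>sphere_prob)"
  proof (rule Bochner_Integration.integral_mono_AE)
    show "AE u in sphere_prob. (1/M) powr (real CARD('n)) \<le> inverse (h u) powr (real CARD('n))"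
      using AE_sphere_prob
    proof (rule AE_mp, intro AE_I2 impI)
      fix u :: "real^'n" assume "norm u = 1"
      then have "h u \<le> M" "m \<le> h u" using mM by auto
      then have "1/M \<le> inverse (h u)" using mM M0 by (simp add: field_simps)
      then show "(1/M) powr (real CARD('n)) \<le> inverse (h u) powr (real CARD('n))"
        using M0 by (intro powr_mono2) auto
    qed
  qed (use intN in auto)
  moreover have "(\<integral>u. (1/M) powr (real CARD('n)) \<partial>(sphere_prob::(real^'n) measure)) = (1/M) powr (real CARD('n))"
    using emeasure_sphere_prob_UNIV[where 'n='n] by (simp add: measure_def)
  moreover have "(1/M) powr (real CARD('n)) > 0" using M0 by simp
  ultimately have kpos: "(\<integral>u. inverse (h u) powr (real CARD('n)) \<partial>sphere_prob) > 0" by linarith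
  have "vol (starset (\<lambda>u. inverse (h u))) > 0"
    using star_volume(2)[OF nn meas intN] kpos wB_pos[where 'n='n] by simp
  then show ?thesis
    by unfold_locales (use p N2 meas nn int in auto)
qed

end

lemma inv_powr_identity:
  fixes h N p :: real
  assumes "h > 0"
  shows "inverse h powr (N + p) * h powr p = inverse h powr N"
proof -
  have "inverse h powr (N + p) * h powr p = inverse h powr N * (inverse h powr p * h powr p)"
    by (simp add: powr_add mult_ac)
  also have "inverse h powr p * h powr p = (inverse h * h) powr p"
    by (rule powr_mult[symmetric])
  also have "\<dots> = 1" using assms by simp
  finally show ?thesis by simp
qed

lemma (in star_data) Phi_meas[measurable]: "(\<lambda>u. PhiS p \<rho> u) \<in> borel_measurable borel"
proof -
  interpret sp: finite_measure "sphere_prob :: (real^'n) measure" by (rule finite_measure_sphere_prob)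
  have "(\<lambda>u. PhiS p \<rho> u) \<in> borel_measurable (sphere_prob :: (real^'n) measure)"
    unfolding PhiS_def
    by (rule sp.borel_measurable_lebesgue_integral) (simp add: measurable_cong_sets[OF sets_pair_measure_cong[OF sets_sphere_prob sets_sphere_prob] refl])
  then show ?thesis by (simp add: measurable_cong_sets[OF sets_sphere_prob refl])
qed

lemma ratio_lemma:
  fixes a b c k0 k1 :: real
  assumes "a > 0" "b > 0" "c > 0" "k0 > 0" "k1 > 0"
  shows "a / (b * c * k1) * k1 / (a / (b * c * k0)) = k0"
  using assms by (simp add: field_simps)

theorem lemma4p2:
  fixes K :: "(real^'n) set" and p :: real
  assumes "p \<ge> 1" and "CARD('n) \<ge> 2"
    and "Lstar p K" and "vol K > 0"
  shows "vol (LambdaPolar p (LambdaPolar p K)) \<ge> vol K \<and>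
         (vol (LambdaPolar p (LambdaPolar p K)) = vol K \<longleftrightarrow>
            (AE u in sphere_prob. radial K u = radial (LambdaPolar p (LambdaPolar p K)) u))"
proof -
  note p = assms(1) and N2 = assms(2)
  define N where "N = real CARD('n)"
  have N1: "N \<ge> 1" unfolding N_def by simp
  interpret sp: finite_measure "sphere_prob :: (real^'n) measure" by (rule finite_measure_sphere_prob)
  obtain \<rho> where \<rho>: "\<rho> \<in> borel_measurable sphere_prob" "\<forall>u\<in>sphere 0 1. 0 \<le> \<rho> u"
    "integrable sphere_prob (\<lambda>u. \<rho> u powr (real CARD('n) + p))"
    "K = {r *\<^sub>R u |r u. u \<in> sphere 0 1 \<and> 0 \<le> r \<and> r \<le> \<rho> u}"
    using assms(3) unfolding Lstar_def by blast
  have Ks: "K = starset \<rho>" using \<rho>(4) unfolding starset_def .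
  have meas: "\<rho> \<in> borel_measurable borel"
    using \<rho>(1) by (simp add: measurable_cong_sets[OF sets_sphere_prob refl])
  interpret S0: star_data p \<rho>
    by unfold_locales (use p N2 meas \<rho> assms(4) Ks in auto)
  define h0 where "h0 = hLambda p K"
  interpret G0: gauge_fn h0 unfolding h0_def Ks by (rule S0.gauge)
  define \<rho>1 where "\<rho>1 u = inverse (h0 u)" for u
  have M1: "LambdaPolar p K = starset \<rho>1"
    unfolding LambdaPolar_def Lambda_def h0_def[symmetric] G0.polar_eq G0.sublevel_starset \<rho>1_def by simp
  interpret S1: star_data p \<rho>1 unfolding \<rho>1_def by (rule G0.star_data_inv[OF p N2])
  define h1 where "h1 = hLambda p (starset \<rho>1)"
  interpret G1: gauge_fn h1 unfolding h1_def by (rule S1.gauge)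
  define \<rho>2 where "\<rho>2 u = inverse (h1 u)" for u
  have M2': "LambdaPolar p (starset \<rho>1) = starset \<rho>2"
    unfolding LambdaPolar_def Lambda_def h1_def[symmetric] G1.polar_eq G1.sublevel_starset \<rho>2_def by simp
  have M2: "LambdaPolar p (LambdaPolar p K) = starset \<rho>2"
    by (simp only: M1 M2')
  interpret S2: star_data p \<rho>2 unfolding \<rho>2_def by (rule G1.star_data_inv[OF p N2])
  define wb where "wb = measure lborel (ball (0::real^'n) 1)"
  have wb: "wb > 0" unfolding wb_def by (rule wB_pos)
  have volK: "vol K = wb * S0.kk" unfolding Ks wb_def by (rule S0.vol_eq)
  have volM2: "vol (LambdaPolar p (LambdaPolar p K)) = wb * S2.kk" unfolding M2 wb_def by (rule S2.vol_eq)

  have stepA: "S1.kk = S0.CK * Ipair p \<rho>1 \<rho>"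
  proof -
    have "S1.kk = (\<integral>u. S0.CK * (\<rho>1 u powr (real CARD('n) + p) * PhiS p \<rho> u) \<partial>sphere_prob)"
      unfolding S1.kk_def
    proof (rule integral_cong_AE)
      show "AE u in sphere_prob. \<rho>1 u powr (real CARD('n)) = S0.CK * (\<rho>1 u powr (real CARD('n) + p) * PhiS p \<rho> u)"
        using AE_sphere_prob
      proof (rule AE_mp, intro AE_I2 impI)
        fix u :: "real^'n" assume u: "norm u = 1"
        then have hu: "h0 u > 0" by (intro G0.pos) auto
        have "\<rho>1 u powr (real CARD('n)) = \<rho>1 u powr (real CARD('n) + p) * h0 u powr p"
          unfolding \<rho>1_def using inv_powr_identity[OF hu] by simp
        also have "h0 u powr p = S0.CK * PhiS p \<rho> u" unfolding h0_def Ks by (rule S0.hLambda_pow)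
        finally show "\<rho>1 u powr (real CARD('n)) = S0.CK * (\<rho>1 u powr (real CARD('n) + p) * PhiS p \<rho> u)"
          by (simp add: mult_ac)
      qed
    qed (auto simp: measurable_cong_sets[OF sets_sphere_prob refl])
    also have "\<dots> = S0.CK * Ipair p \<rho>1 \<rho>" unfolding Ipair_def by simp
    finally show ?thesis .
  qed
  have stepB: "(\<integral>u. \<rho> u powr (real CARD('n) + p) * h1 u powr p \<partial>sphere_prob) = S0.kk"
  proof -
    have "(\<integral>u. \<rho> u powr (real CARD('n) + p) * h1 u powr p \<partial>sphere_prob) = (\<integral>u. S1.CK * (\<rho> u powr (real CARD('n) + p) * PhiS p \<rho>1 u) \<partial>sphere_prob)"
      unfolding h1_def S1.hLambda_pow by (simp add: mult_ac)
    also have "\<dots> = S1.CK * Ipair p \<rho> \<rho>1" unfolding Ipair_def by simp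
    also have "Ipair p \<rho> \<rho>1 = Ipair p \<rho>1 \<rho>"
      by (rule Ipair_sym) (unfold_locales)
    also have "S1.CK * Ipair p \<rho>1 \<rho> = S1.CK * S1.kk / S0.CK"
      using stepA S0.CK_pos by simp
    also have "\<dots> = S0.kk"
    proof -
      have "real CARD('n) > 0" "real CARD('n) + p > 0" using p by auto
      then show ?thesis
        unfolding S0.CK_def S1.CK_def using S0.kk_pos S1.kk_pos ctilde_pos[OF N2 p]
        by (intro ratio_lemma) auto
    qed
    finally show ?thesis .
  qed
  define f where "f u = N * (\<rho> u powr (N + p) * h1 u powr p) + p * \<rho>2 u powr N - (N + p) * \<rho> u powr N" for u
  obtain m1 M1' where mM1: "0 < m1" "\<forall>u\<in>sphere (0::real^'n) 1. m1 \<le> h1 u \<and> h1 u \<le> M1'"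
    using G1.sphere_bounds by blast
  have int1: "integrable sphere_prob (\<lambda>u. \<rho> u powr (real CARD('n) + p) * h1 u powr p)"
  proof -
    have "integrable sphere_prob (\<lambda>u. M1' powr p * \<rho> u powr (real CARD('n) + p))"
      using S0.int by simp
    moreover have "(\<lambda>u. \<rho> u powr (real CARD('n) + p) * h1 u powr p) \<in> borel_measurable sphere_prob"
      by (simp add: measurable_cong_sets[OF sets_sphere_prob refl])
    moreover have "AE u in sphere_prob. norm (\<rho> u powr (real CARD('n) + p) * h1 u powr p) \<le> norm (M1' powr p * \<rho> u powr (real CARD('n) + p))"
      using AE_sphere_prob
    proof (rule AE_mp, intro AE_I2 impI)
      fix u :: "real^'n" assume "norm u = 1"
      then have "h1 u \<le> M1'" using mM1 by auto
      then have "h1 u powr p \<le> M1' powr p" using p G1.nonneg[of u] by (intro powr_mono2) auto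
      then show "norm (\<rho> u powr (real CARD('n) + p) * h1 u powr p) \<le> norm (M1' powr p * \<rho> u powr (real CARD('n) + p))"
        by (simp add: mult.commute mult_right_mono)
    qed
    ultimately show ?thesis by (rule Bochner_Integration.integrable_bound)
  qed
  have intf: "integrable sphere_prob f"
    unfolding f_def N_def using int1 S0.intN S2.intN
    by (intro Bochner_Integration.integrable_diff Bochner_Integration.integrable_add integrable_mult_right)
  have intf_eq: "(\<integral>u. f u \<partial>sphere_prob) = p * (S2.kk - S0.kk)"
  proof -
    have "(\<integral>u. f u \<partial>sphere_prob) = N * (\<integral>u. \<rho> u powr (real CARD('n) + p) * h1 u powr p \<partial>sphere_prob)
        + p * S2.kk - (N + p) * S0.kk"
      unfolding f_def N_def S2.kk_def S0.kk_def using int1 S0.intN S2.intN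
      by (simp add: mult.assoc)
    then show ?thesis using stepB by (simp add: algebra_simps)
  qed
  have fpt: "f u \<ge> 0 \<and> (f u = 0 \<longleftrightarrow> \<rho> u = \<rho>2 u)" if u: "norm u = 1" for u :: "real^'n"
  proof -
    have hu: "h1 u > 0" using u by (intro G1.pos) auto
    have a: "\<rho> u \<ge> 0" using S0.nn u by auto
    have b: "\<rho>2 u > 0" using hu by (simp add: \<rho>2_def)
    have hb: "h1 u = 1 / \<rho>2 u" using hu by (simp add: \<rho>2_def divide_inverse)
    have y1: "(N + p) * \<rho> u powr N \<le> N * \<rho> u powr (N + p) * (1 / \<rho>2 u) powr p + p * \<rho>2 u powr N"
      by (rule young_ineq(1)[OF N1 _ a b]) (use p in auto)
    have y2: "\<rho> u \<noteq> \<rho>2 u \<Longrightarrow> (N + p) * \<rho> u powr N < N * \<rho> u powr (N + p) * (1 / \<rho>2 u) powr p + p * \<rho>2 u powr N"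
      by (rule young_ineq(2)[OF N1 _ a b]) (use p in auto)
    have y3: "\<rho> u = \<rho>2 u \<Longrightarrow> f u = 0"
    proof -
      assume e: "\<rho> u = \<rho>2 u"
      have "\<rho>2 u powr (N + p) * (1 / \<rho>2 u) powr p = \<rho>2 u powr N"
        using b by (simp add: powr_add powr_divide)
      then show "f u = 0" unfolding f_def hb e by (simp add: algebra_simps)
    qed
    show ?thesis using y1 y2 y3 unfolding f_def hb by (force simp: mult.assoc)
  qed
  have AEf: "AE u in sphere_prob. 0 \<le> f u" using AE_sphere_prob by eventually_elim (use fpt in auto)
  have "0 \<le> (\<integral>u. f u \<partial>sphere_prob)" using AEf by (rule integral_nonneg_AE)
  then have ineq: "S0.kk \<le> S2.kk" using intf_eq p by (simp add: zero_le_mult_iff)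
  have "vol (LambdaPolar p (LambdaPolar p K)) = vol K \<longleftrightarrow> S2.kk = S0.kk"
    using volK volM2 wb by simp
  also have "\<dots> \<longleftrightarrow> (\<integral>u. f u \<partial>sphere_prob) = 0" using intf_eq p by simp
  also have "\<dots> \<longleftrightarrow> (AE u in sphere_prob. f u = 0)" by (rule integral_nonneg_eq_0_iff_AE[OF intf AEf])
  also have "\<dots> \<longleftrightarrow> (AE u in sphere_prob. radial K u = radial (LambdaPolar p (LambdaPolar p K)) u)"
  proof -
    have H: "AE u in sphere_prob. (f u = 0) = (radial K u = radial (LambdaPolar p (LambdaPolar p K)) u)"
      using AE_sphere_prob
    proof (rule AE_mp, intro AE_I2 impI)
      fix u :: "real^'n" assume u: "norm u = 1"
      have "radial K u = \<rho> u" unfolding Ks by (rule radial_starset[OF S0.nn u])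
      moreover have "radial (LambdaPolar p (LambdaPolar p K)) u = \<rho>2 u"
        unfolding M2 by (rule radial_starset[OF S2.nn u])
      ultimately show "(f u = 0) = (radial K u = radial (LambdaPolar p (LambdaPolar p K)) u)"
        using fpt[OF u] by simp
    qed
    then show ?thesis
    proof (intro iffI)
      assume "AE u in sphere_prob. f u = 0"
      with H show "AE u in sphere_prob. radial K u = radial (LambdaPolar p (LambdaPolar p K)) u"
        by eventually_elim simp
    next
      assume "AE u in sphere_prob. radial K u = radial (LambdaPolar p (LambdaPolar p K)) u"
      with H show "AE u in sphere_prob. f u = 0"
        by eventually_elim simp
    qed
  qed
  finally show ?thesis using ineq volK volM2 wb by (simp add: mult_left_mono)
qed

end
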